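(* Let $(S,\mathcal B_S,\mu)$ be a standard Lebesgue space with $\sigma$-finite measure $\mu$, and $f,g:S\to[0,\infty)$ measurable with $\int_S f\,d\mu=\int_S g\,d\mu=1$. Let $(X,Y)$ satisfy \[ \mathbb P(X\le x,Y\le y)=\exp\Big\{-\int_S \max\Big(\frac{f(s)}{x},\frac{g(s)}{y}\Big)\mu(ds)\Big\},\qquad x,y>0, \] and let $(X_i,Y_i)$, $i\ge1$, be i.i.d. copies. Let $\gamma(t)=\frac1t\int_S f\mathbf 1_{\{f>tg\}}d\mu$, suppose $\mu(\{f>tg\})>0$ for all $t\in(0,\infty)$ and $\gamma\in RV_{-\alpha}$ for some $\alpha$ (equivalently $X/Y\in RV_{-\alpha}$). Let $\kappa_t\sim(1/\gamma)^{\leftarrow}(t)$. Then \[ t\,\mathbb P\Big[\Big(\frac{X/Y}{\kappa_t},\frac Yt\Big)\in\cdot\Big]\xrightarrow{v}\nu(\cdot) \] in $M_+(\mathbb E)$, $\mathbb E=[0,\infty]^2\setminus\{(0,0)\}$, with $\nu$ concentrated on the two axes. In other words, \[ \Big(\frac1{\kappa_n}\max_{1\le i\le n}\frac{X_i}{Y_i},\;\frac1n\max_{1\le i\le n}Y_i\Big)\Rightarrow(\zeta^{(1)}_\alpha,\zeta^{(2)}_1), \] where $\zeta^{(1)}_\alpha$ and $\zeta^{(2)}_1$ are independent standard Fréchet random variables with indices $\alpha$ and $1$.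
   Context: $RV_{-\rho}$: $U(tx)/U(t)\to x^{-\rho}$ for all $x>0$. $U^{\leftarrow}(y)=\inf\{s:U(s)\ge y\}$. $M_+(\mathbb E)$ is the space of nonnegative Radon measures on $\mathbb E$ and $\xrightarrow{v}$ denotes vague convergence. Standard $\alpha$-Fréchet: $\mathbb P(\zeta_\alpha\le t)=\exp(-t^{-\alpha})$. Convention $1/0=\infty$. *)

theory Defs
  imports "HOL-Probability.Probability" "HOL-Library.Landau_Symbols"
begin

definition regvar_neg :: "real \<Rightarrow> (real \<Rightarrow> real) \<Rightarrow> bool" where
  "regvar_neg rho U \<longleftrightarrow>
     (\<forall>x>0. ((\<lambda>t. U (t * x) / U t) \<longlongrightarrow> x powr (- rho)) at_top)"

definition left_inv :: "(real \<Rightarrow> real) \<Rightarrow> real \<Rightarrow> real" where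
  "left_inv U y = Inf {s. 0 < s \<and> U s \<ge> y}"

definition gamma_fn :: "'a measure \<Rightarrow> ('a \<Rightarrow> real) \<Rightarrow> ('a \<Rightarrow> real) \<Rightarrow> real \<Rightarrow> real" where
  "gamma_fn mu f g t = (1 / t) * (\<integral>s. f s * indicator {s \<in> space mu. f s > t * g s} s \<partial>mu)"

end

theory Submission
  imports Defs
begin


lemma dini_mono:
  fixes \<Phi> :: "real \<Rightarrow> real"
  assumes pq: "p \<le> q" and cont: "continuous_on {p..q} \<Phi>"
    and R: "\<And>t e. t \<in> {p..<q} \<Longrightarrow> e > 0 \<Longrightarrow> \<exists>d>0. \<forall>h. 0 < h \<and> h < d \<longrightarrow> \<Phi> (t+h) \<le> \<Phi> t + e*h"
  shows "\<Phi> q \<le> \<Phi> p"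
proof -
  have main: "\<Phi> q \<le> \<Phi> p + e * (q - p)" if e: "e > 0" for e
  proof -
    define S where "S = {p..q} \<inter> (\<lambda>t. \<Phi> t - e * (t - p)) -` {..\<Phi> p}"
    have cS: "closed S" unfolding S_def
      by (intro continuous_closed_preimage continuous_intros cont closed_atLeastAtMost closed_atMost)
    have pS: "p \<in> S" using pq by (auto simp: S_def)
    have bS: "bdd_above S" by (auto simp: S_def bdd_above_def)
    define T where "T = Sup S"
    have TS: "T \<in> S" unfolding T_def using cS pS bS closed_contains_Sup by blast
    have Tq: "T \<le> q" using TS by (auto simp: S_def)
    have "T = q"
    proof (rule ccontr)
      assume "T \<noteq> q" with Tq have Tq': "T < q" by simp
      have Tp: "T \<ge> p" using TS by (auto simp: S_def)
      obtain d where d: "d > 0" "\<And>h. 0 < h \<and> h < d \<Longrightarrow> \<Phi> (T+h) \<le> \<Phi> T + e*h"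
        using R[of T e] Tq' Tp e by auto
      define h where "h = min (d/2) (q - T)"
      have h: "0 < h" "h < d" "T + h \<le> q" using d Tq' by (auto simp: h_def)
      have "\<Phi> (T+h) \<le> \<Phi> T + e*h" using d h by auto
      also have "\<Phi> T \<le> \<Phi> p + e * (T - p)" using TS by (auto simp: S_def)
      finally have "T + h \<in> S" using h Tp by (auto simp: S_def algebra_simps)
      then have "T + h \<le> T" unfolding T_def using bS by (rule cSup_upper)
      then show False using h by simp
    qed
    then show ?thesis using TS by (auto simp: S_def)
  qed
  show ?thesis
  proof (rule field_le_epsilon)
    fix e :: real assume e: "e > 0"
    have "\<Phi> q \<le> \<Phi> p + (e / (q - p + 1)) * (q - p)" using e pq by (intro main) auto
    also have "(e / (q - p + 1)) * (q - p) \<le> e" using e pq by (simp add: field_simps)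
    finally show "\<Phi> q \<le> \<Phi> p + e" by simp
  qed
qed
lemma rd_eps:
  fixes Q :: "real \<Rightarrow> real"
  assumes "((\<lambda>h. Q h / h) \<longlongrightarrow> 0) (at_right 0)" "e > 0"
  shows "\<exists>d>0. \<forall>h. 0 < h \<and> h < d \<longrightarrow> Q h \<le> e * h"
proof -
  have "eventually (\<lambda>h. Q h / h < e) (at_right 0)" using order_tendstoD(2)[OF assms] .
  then obtain d where d: "d > 0" "\<And>h. h > 0 \<Longrightarrow> h < d \<Longrightarrow> Q h / h < e"
    unfolding eventually_at_right_field by auto
  show ?thesis
  proof (intro exI[of _ d] conjI allI impI)
    fix h assume "0 < h \<and> h < d"
    then show "Q h \<le> e * h" using d(2)[of h] by (simp add: pos_divide_less_eq)
  qed (use d in auto)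
qed

lemma exp_lip: "0 \<le> v \<Longrightarrow> v \<le> u \<Longrightarrow> exp (-v) - exp (-u) \<le> u - (v::real)"
proof -
  assume v: "0 \<le> v" "v \<le> u"
  have "exp (-v) - exp (-u) = exp (-v) * (1 - exp (-(u - v)))"
    by (simp add: algebra_simps flip: exp_add)
  also have "\<dots> \<le> 1 * (u - v)"
  proof (rule mult_mono)
    show "exp (-v) \<le> 1" using v by simp
    have "1 + (v - u) \<le> exp (v - u)" by (rule exp_ge_add_one_self)
    moreover have "exp (-(u-v)) = exp (v - u)" by simp
    ultimately show "1 - exp (-(u - v)) \<le> u - v" by linarith
    show "0 \<le> 1 - exp (- (u - v))" using v by simp
  qed simp
  finally show ?thesis by simp
qed

lemma exp_sub: "0 \<le> u \<Longrightarrow> 0 \<le> w \<Longrightarrow> exp (-u) - w \<le> exp (-(u + w::real))"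
proof -
  assume u: "0 \<le> u" "0 \<le> w"
  have "exp (-u) - exp (-(u+w)) \<le> (u + w) - u" using u by (intro exp_lip) auto
  then show ?thesis by simp
qed

lemma exp_small: "c > 0 \<Longrightarrow> b > 0 \<Longrightarrow> exp (- c / b) \<le> b / (c::real)"
proof -
  assume cb: "c > 0" "b > 0"
  have "c / b \<le> exp (c / b)" using exp_ge_add_one_self[of "c/b"] by linarith
  then have "1 / exp (c/b) \<le> 1 / (c / b)" using cb by (intro divide_left_mono) auto
  then show ?thesis using cb by (simp add: exp_minus field_simps)
qed

lemma d_inv: "t > 0 \<Longrightarrow> ((\<lambda>h. k/(t+h)) has_real_derivative (-k/t^2)) (at (0::real))"
  by (auto intro!: derivative_eq_intros simp: power2_eq_square)
lemma d_exp_inv: "t > 0 \<Longrightarrow> ((\<lambda>h. exp (-(a + k/(t+h)))) has_real_derivative (exp (-(a + k/t)) * (k/t^2))) (at (0::real))"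
  by (auto intro!: derivative_eq_intros d_inv simp: power2_eq_square)

lemma Fp_lim:
  fixes A G c t :: real
  assumes c: "c = A + G" "c > 0" and t: "t > 0"
  shows "((\<lambda>h. (exp (-c/(t+h)) - exp (-(A/t + G/(t+h))) - (A/c)*(exp (-c/(t+h)) - exp (-c/t))) / h) \<longlongrightarrow> 0) (at_right 0)"
proof -
  define F where "F h = exp (-(0 + c/(t+h))) - exp (-(A/t + G/(t+h))) - (A/c)*(exp (-(0 + c/(t+h))) - exp (-c/t))" for h
  have dF: "(F has_real_derivative (exp (-(0 + c/t)) * (c/t^2) - exp (-(A/t + G/t)) * (G/t^2) - (A/c) * (exp (-(0 + c/t)) * (c/t^2) - 0))) (at 0)"
    unfolding F_def by (intro DERIV_diff DERIV_cmult d_exp_inv DERIV_const t)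
  moreover have eq: "exp (-(0 + c/t)) * (c/t^2) - exp (-(A/t + G/t)) * (G/t^2) - (A/c) * (exp (-(0 + c/t)) * (c/t^2) - 0) = 0"
  proof -
    have 1: "exp (-(A/t + G/t)) = exp (-(0 + c/t))" using c by (simp add: add_divide_distrib)
    have 2: "(A/c) * (exp (-(0 + c/t)) * (c/t^2) - 0) = exp (-(0 + c/t)) * (A/t^2)" using c by simp
    have 3: "exp (-(0 + c/t)) * (c/t^2) - exp (-(0 + c/t)) * (G/t^2) - exp (-(0 + c/t)) * (A/t^2) = 0"
      using c(1) t by (simp add: field_simps)
    show ?thesis unfolding 1 2 3 by simp
  qed
  ultimately have "(F has_real_derivative 0) (at 0)" by (simp only:)
  then have "((\<lambda>h. (F (0 + h) - F 0) / h) \<longlongrightarrow> 0) (at 0)" unfolding DERIV_def .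
  moreover have "F 0 = 0"
  proof -
    have "A/t + G/t = c/t" using c by (simp add: add_divide_distrib)
    then show ?thesis by (simp add: F_def)
  qed
  ultimately have "((\<lambda>h. F h / h) \<longlongrightarrow> 0) (at 0)" by simp
  then show ?thesis unfolding F_def filterlim_at_split by simp
qed

lemma Fm_lim:
  fixes A P c t :: real
  assumes c: "c = P + A" "c > 0" and t: "t > 0"
  shows "((\<lambda>h. (exp (-(P/t + A/(t+h))) - exp (-c/t) - (A/c)*(exp (-c/(t+h)) - exp (-c/t))) / h) \<longlongrightarrow> 0) (at_right 0)"
proof -
  define F where "F h = exp (-(P/t + A/(t+h))) - exp (-c/t) - (A/c)*(exp (-(0 + c/(t+h))) - exp (-c/t))" for h
  have dF: "(F has_real_derivative (exp (-(P/t + A/t)) * (A/t^2) - 0 - (A/c) * (exp (-(0 + c/t)) * (c/t^2) - 0))) (at 0)"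
    unfolding F_def by (intro DERIV_diff DERIV_cmult d_exp_inv DERIV_const t)
  moreover have eq: "exp (-(P/t + A/t)) * (A/t^2) - 0 - (A/c) * (exp (-(0 + c/t)) * (c/t^2) - 0) = 0"
  proof -
    have 1: "exp (-(P/t + A/t)) = exp (-(0 + c/t))" using c by (simp add: add_divide_distrib)
    have 2: "(A/c) * (exp (-(0 + c/t)) * (c/t^2) - 0) = exp (-(0 + c/t)) * (A/t^2)" using c by simp
    show ?thesis unfolding 1 2 by simp
  qed
  ultimately have "(F has_real_derivative 0) (at 0)" by (simp only:)
  then have "((\<lambda>h. (F (0 + h) - F 0) / h) \<longlongrightarrow> 0) (at 0)" unfolding DERIV_def .
  moreover have "F 0 = 0"
  proof -
    have "P/t + A/t = c/t" using c by (simp add: add_divide_distrib)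
    then show ?thesis by (simp add: F_def)
  qed
  ultimately have "((\<lambda>h. F h / h) \<longlongrightarrow> 0) (at 0)" by simp
  then show ?thesis unfolding F_def filterlim_at_split by simp
qed

lemma kE_lim:
  fixes E :: "real \<Rightarrow> real"
  assumes t: "t > 0" and E: "(E \<longlongrightarrow> 0) (at_right 0)"
  shows "((\<lambda>h. ((1/t - 1/(t+h)) * K) * E h / h) \<longlongrightarrow> 0) (at_right 0)"
proof -
  have "((\<lambda>h. K / (t * (t + h)) * E h) \<longlongrightarrow> K / (t * (t + 0)) * 0) (at_right 0)"
    using t by (intro tendsto_intros E) auto
  then have *: "((\<lambda>h. K / (t * (t + h)) * E h) \<longlongrightarrow> 0) (at_right 0)" by simp
  have "eventually (\<lambda>h. K / (t * (t + h)) * E h = ((1/t - 1/(t+h)) * K) * E h / h) (at_right 0)"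
    unfolding eventually_at_right_field
  proof (intro exI[of _ 1] conjI allI impI)
    fix h :: real assume h: "h > 0" "h < 1"
    have th: "t + h > 0" using t h by simp
    have "1/t - 1/(t+h) = h/(t*(t+h))" using t th by (simp add: field_simps)
    then show "K / (t * (t + h)) * E h = ((1/t - 1/(t+h)) * K) * E h / h"
      using h by simp
  qed simp
  then show ?thesis using * by (rule Lim_transform_eventually[rotated])
qed


lemma inv_n_lim: "((\<lambda>n. 1 / real n) \<longlongrightarrow> 0) sequentially"
  using tendsto_inverse_0_at_top[OF filterlim_real_sequentially] by (simp add: inverse_eq_divide)

lemma div_n_lim: assumes "((\<lambda>n. real n * w n) \<longlongrightarrow> z) sequentially"
  shows "(w \<longlongrightarrow> 0) sequentially"
proof -
  have "((\<lambda>n. (real n * w n) * (1 / real n)) \<longlongrightarrow> z * 0) sequentially"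
    by (intro tendsto_mult assms inv_n_lim)
  moreover have "eventually (\<lambda>n. (real n * w n) * (1 / real n) = w n) sequentially"
    using eventually_gt_at_top[of 0] by eventually_elim simp
  ultimately show ?thesis by (simp add: Lim_transform_eventually)
qed

lemma pow_lim:
  fixes u :: "nat \<Rightarrow> real"
  assumes L: "((\<lambda>n. real n * (1 - u n)) \<longlongrightarrow> z) sequentially" and u1: "eventually (\<lambda>n. u n \<le> 1) sequentially"
  shows "((\<lambda>n. u n ^ n) \<longlongrightarrow> exp (-z)) sequentially"
proof -
  define w where "w n = 1 - u n" for n
  have w0: "eventually (\<lambda>n. w n \<ge> 0) sequentially" using u1 by (simp add: w_def)
  have L': "((\<lambda>n. real n * w n) \<longlongrightarrow> z) sequentially" using L by (simp add: w_def)
  have wl: "(w \<longlongrightarrow> 0) sequentially" by (rule div_n_lim[OF L'])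
  have evw: "eventually (\<lambda>n. w n < 1/2) sequentially" using order_tendstoD(2)[OF wl, of "1/2"] by simp
  have lo: "((\<lambda>n. - (real n * w n) - 2 * (real n * w n) * w n) \<longlongrightarrow> - z - 2 * z * 0) sequentially"
    by (intro tendsto_intros L' wl)
  have up: "((\<lambda>n. - (real n * w n)) \<longlongrightarrow> - z) sequentially" by (intro tendsto_intros L')
  have "((\<lambda>n. real n * ln (1 - w n)) \<longlongrightarrow> - z) sequentially"
  proof (rule tendsto_sandwich[OF _ _ _ up])
    show "eventually (\<lambda>n. - (real n * w n) - 2 * (real n * w n) * w n \<le> real n * ln (1 - w n)) sequentially"
      using evw w0
    proof eventually_elim
      case (elim n)
      have "- w n - 2 * (w n)\<^sup>2 \<le> ln (1 - w n)" using ln_one_minus_pos_lower_bound[of "w n"] elim by auto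
      then have "real n * (- w n - 2 * (w n)\<^sup>2) \<le> real n * ln (1 - w n)" by (intro mult_left_mono) auto
      then show ?case by (simp add: algebra_simps power2_eq_square)
    qed
    show "eventually (\<lambda>n. real n * ln (1 - w n) \<le> - (real n * w n)) sequentially"
      using evw
    proof eventually_elim
      case (elim n)
      have "ln (1 - w n) \<le> (1 - w n) - 1" using elim by (intro ln_le_minus_one) auto
      then have "real n * ln (1 - w n) \<le> real n * (- w n)" by (intro mult_left_mono) auto
      then show ?case by simp
    qed
    show "((\<lambda>n. - (real n * w n) - 2 * (real n * w n) * w n) \<longlongrightarrow> - z) sequentially" using lo by simp
  qed
  then have "((\<lambda>n. exp (real n * ln (1 - w n))) \<longlongrightarrow> exp (- z)) sequentially" by (intro tendsto_intros)
  moreover have "eventually (\<lambda>n. exp (real n * ln (1 - w n)) = u n ^ n) sequentially"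
    using evw
  proof eventually_elim
    case (elim n)
    have "u n > 0" using elim by (simp add: w_def)
    then show ?case by (simp add: w_def exp_of_nat_mult)
  qed
  ultimately show ?thesis by (rule Lim_transform_eventually)
qed

lemma one_minus_exp_lo: "w \<ge> 0 \<Longrightarrow> w / (1 + w) \<le> 1 - exp (- w::real)"
proof -
  assume w: "w \<ge> 0"
  have "1 + w \<le> exp w" by (rule exp_ge_add_one_self)
  then have "1 / exp w \<le> 1 / (1 + w)" using w by (intro divide_left_mono) auto
  then have "exp (-w) \<le> 1 / (1 + w)" by (simp add: exp_minus inverse_eq_divide)
  moreover have "1 - 1 / (1 + w) = w / (1 + w)" using w by (simp add: field_simps)
  ultimately show ?thesis by linarith
qed

lemma num_lim:
  fixes c G :: "nat \<Rightarrow> real"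
  assumes c: "(c \<longlongrightarrow> 1) sequentially" and c1: "\<And>n. c n \<ge> 1"
    and G: "((\<lambda>n. real n * G n) \<longlongrightarrow> g) sequentially" and y: "y > 0"
  shows "((\<lambda>n. real n * (1 - ((c n - G n) / c n) * exp (- c n / (real n * y)))) \<longlongrightarrow> g + 1/y) sequentially"
proof -
  define w where "w n = c n / (real n * y)" for n
  have w0: "w n \<ge> 0" for n using c1[of n] y by (simp add: w_def)
  have nw: "eventually (\<lambda>n. real n * w n = c n / y) sequentially"
    using eventually_gt_at_top[of 0] by eventually_elim (use y in \<open>simp add: w_def\<close>)
  have nwl: "((\<lambda>n. real n * w n) \<longlongrightarrow> 1 / y) sequentially"
  proof -
    have "((\<lambda>n. c n / y) \<longlongrightarrow> 1 / y) sequentially" using y by (intro tendsto_intros c) auto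
    then show ?thesis using nw by (simp add: Lim_transform_eventually eventually_mono[OF nw, of "\<lambda>n. c n / y = real n * w n"])
  qed
  have wl: "(w \<longlongrightarrow> 0) sequentially" by (rule div_n_lim[OF nwl])
  have E1: "((\<lambda>n. real n * (1 - exp (- w n))) \<longlongrightarrow> 1/y) sequentially"
  proof (rule tendsto_sandwich[OF _ _ _ nwl])
    have "((\<lambda>n. (real n * w n) / (1 + w n)) \<longlongrightarrow> (1/y) / (1 + 0)) sequentially"
      by (intro tendsto_intros nwl wl) auto
    then show "((\<lambda>n. (real n * w n) / (1 + w n)) \<longlongrightarrow> 1/y) sequentially" by simp
    show "eventually (\<lambda>n. (real n * w n) / (1 + w n) \<le> real n * (1 - exp (- w n))) sequentially"
    proof (intro always_eventually allI)
      fix n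
      have "real n * (w n / (1 + w n)) \<le> real n * (1 - exp (- w n))"
        by (intro mult_left_mono one_minus_exp_lo w0) auto
      then show "(real n * w n) / (1 + w n) \<le> real n * (1 - exp (- w n))" by simp
    qed
    show "eventually (\<lambda>n. real n * (1 - exp (- w n)) \<le> real n * w n) sequentially"
    proof (intro always_eventually allI)
      fix n
      have "1 - exp (- w n) \<le> w n" using exp_ge_add_one_self[of "- w n"] by simp
      then show "real n * (1 - exp (- w n)) \<le> real n * w n" by (intro mult_left_mono) auto
    qed
  qed
  have El: "((\<lambda>n. exp (- w n)) \<longlongrightarrow> exp (- 0)) sequentially" by (intro tendsto_intros wl)
  have "((\<lambda>n. real n * (1 - exp (- w n)) + (real n * G n) * exp (- w n) / c n) \<longlongrightarrow> 1/y + g * exp (-0) / 1) sequentially"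
    by (intro tendsto_intros E1 G El c) auto
  moreover have "real n * (1 - exp (- w n)) + (real n * G n) * exp (- w n) / c n
      = real n * (1 - ((c n - G n) / c n) * exp (- c n / (real n * y)))" for n
  proof -
    have cn: "c n \<noteq> 0" using c1[of n] by auto
    have "exp (- c n / (real n * y)) = exp (- w n)" by (simp add: w_def)
    then show ?thesis using cn by (simp add: field_simps)
  qed
  ultimately show ?thesis by (simp add: add.commute)
qed


locale AN =
  fixes mu :: "'a measure" and f g :: "'a \<Rightarrow> real"
  assumes f_meas[measurable]: "f \<in> borel_measurable mu" and g_meas[measurable]: "g \<in> borel_measurable mu"
    and f_nonneg: "\<forall>s\<in>space mu. f s \<ge> 0" and g_nonneg: "\<forall>s\<in>space mu. g s \<ge> 0"
    and f_int: "integrable mu f" and g_int: "integrable mu g"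
    and f_one: "(\<integral>s. f s \<partial>mu) = 1" and g_one: "(\<integral>s. g s \<partial>mu) = 1"
begin

definition "V x y = (\<integral>s. max (f s / x) (g s / y) \<partial>mu)"
definition "cc a = (\<integral>s. max (f s / a) (g s) \<partial>mu)"
definition "Ag a = (\<integral>s. g s * indicator {s\<in>space mu. f s \<le> a * g s} s \<partial>mu)"
definition "Ag' a = (\<integral>s. g s * indicator {s\<in>space mu. f s < a * g s} s \<partial>mu)"
definition "Gm' a = (1/a) * (\<integral>s. f s * indicator {s\<in>space mu. f s \<ge> a * g s} s \<partial>mu)"
definition "E1 a b h = (\<integral>s. f s * indicator {s\<in>space mu. a * g s < f s \<and> f s * b < a * g s * (b+h)} s \<partial>mu)"
definition "E2 a b h = (\<integral>s. g s * indicator {s\<in>space mu. f s < a * g s \<and> a * g s * b < f s * (b+h)} s \<partial>mu)"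

lemma int_fi: "integrable mu (\<lambda>s. f s * indicator A s)" if "A \<in> sets mu"
  using integrable_real_mult_indicator[OF that f_int] by simp
lemma int_gi: "integrable mu (\<lambda>s. g s * indicator A s)" if "A \<in> sets mu"
  using integrable_real_mult_indicator[OF that g_int] by simp

lemma int_max: "integrable mu (\<lambda>s. max (f s / x) (g s / y))"
proof (rule Bochner_Integration.integrable_bound[where f="\<lambda>s. \<bar>f s / x\<bar> + \<bar>g s / y\<bar>"])
  show "integrable mu (\<lambda>s. \<bar>f s / x\<bar> + \<bar>g s / y\<bar>)"
    using integrable_abs[OF integrable_divide_zero[OF f_int, of x]] integrable_abs[OF integrable_divide_zero[OF g_int, of y]]
    by (rule Bochner_Integration.integrable_add)
  show "AE s in mu. norm (max (f s / x) (g s / y)) \<le> norm (\<bar>f s / x\<bar> + \<bar>g s / y\<bar>)"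
    by (auto simp: abs_if)
qed measurable

lemma split1: "a > 0 \<Longrightarrow> cc a = Ag a + gamma_fn mu f g a"
proof -
  assume a: "a > 0"
  have "cc a = (\<integral>s. g s * indicator {s\<in>space mu. f s \<le> a * g s} s + (1/a) * (f s * indicator {s \<in> space mu. f s > a * g s} s) \<partial>mu)"
    unfolding cc_def
  proof (rule Bochner_Integration.integral_cong[OF refl])
    fix s assume "s \<in> space mu"
    then show "max (f s / a) (g s) = g s * indicator {s\<in>space mu. f s \<le> a * g s} s + (1/a) * (f s * indicator {s \<in> space mu. f s > a * g s} s)"
      using a by (auto simp: indicator_def field_simps max_def)
  qed
  also have "\<dots> = Ag a + gamma_fn mu f g a"
    unfolding Ag_def gamma_fn_def
    by (subst Bochner_Integration.integral_add) (auto intro!: int_gi int_fi integrable_mult_right)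
  finally show ?thesis .
qed

lemma split2: "a > 0 \<Longrightarrow> cc a = Ag' a + Gm' a"
proof -
  assume a: "a > 0"
  have "cc a = (\<integral>s. g s * indicator {s\<in>space mu. f s < a * g s} s + (1/a) * (f s * indicator {s \<in> space mu. f s \<ge> a * g s} s) \<partial>mu)"
    unfolding cc_def
  proof (rule Bochner_Integration.integral_cong[OF refl])
    fix s assume "s \<in> space mu"
    then show "max (f s / a) (g s) = g s * indicator {s\<in>space mu. f s < a * g s} s + (1/a) * (f s * indicator {s \<in> space mu. f s \<ge> a * g s} s)"
      using a by (auto simp: indicator_def field_simps max_def)
  qed
  also have "\<dots> = Ag' a + Gm' a"
    unfolding Ag'_def Gm'_def
    by (subst Bochner_Integration.integral_add) (auto intro!: int_gi int_fi integrable_mult_right)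
  finally show ?thesis .
qed

lemma intfi_le1: "(\<integral>s. f s * indicator A s \<partial>mu) \<le> 1" if "A \<in> sets mu"
proof -
  have "(\<integral>s. f s * indicator A s \<partial>mu) \<le> (\<integral>s. f s \<partial>mu)"
    using that f_nonneg by (intro integral_mono_AE int_fi f_int AE_I2) (auto simp: indicator_def)
  then show ?thesis using f_one by simp
qed

lemma intfi_ge0: "(\<integral>s. f s * indicator A s \<partial>mu) \<ge> 0"
  using f_nonneg by (intro integral_nonneg_AE AE_I2) (auto simp: indicator_def)
lemma intgi_ge0: "(\<integral>s. g s * indicator A s \<partial>mu) \<ge> 0"
  using g_nonneg by (intro integral_nonneg_AE AE_I2) (auto simp: indicator_def)
lemma intgi_le1: "(\<integral>s. g s * indicator A s \<partial>mu) \<le> 1" if "A \<in> sets mu"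
proof -
  have "(\<integral>s. g s * indicator A s \<partial>mu) \<le> (\<integral>s. g s \<partial>mu)"
    using that g_nonneg by (intro integral_mono_AE int_gi g_int AE_I2) (auto simp: indicator_def)
  then show ?thesis using g_one by simp
qed

lemma gam_nonneg: "a > 0 \<Longrightarrow> gamma_fn mu f g a \<ge> 0"
  unfolding gamma_fn_def using intfi_ge0 by simp
lemma gam_le: "a > 0 \<Longrightarrow> gamma_fn mu f g a \<le> 1/a"
  unfolding gamma_fn_def using intfi_le1[of "{s \<in> space mu. f s > a * g s}"]
  by (simp add: divide_right_mono)
lemma Ag_nonneg: "Ag a \<ge> 0" unfolding Ag_def by (rule intgi_ge0)
lemma Ag'_nonneg: "Ag' a \<ge> 0" unfolding Ag'_def by (rule intgi_ge0)

lemma cc_ge: "cc a \<ge> 1"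
proof -
  have "(\<integral>s. g s \<partial>mu) \<le> cc a" unfolding cc_def
    by (intro integral_mono_AE g_int int_max[of a 1, simplified] AE_I2) auto
  then show ?thesis using g_one by simp
qed

lemma cc_le: "a > 0 \<Longrightarrow> cc a \<le> 1 + 1/a"
proof -
  assume a: "a > 0"
  have "cc a \<le> (\<integral>s. g s + f s / a \<partial>mu)" unfolding cc_def
    using f_nonneg g_nonneg a
    by (intro integral_mono_AE int_max[of a 1, simplified] AE_I2 Bochner_Integration.integrable_add g_int integrable_divide_zero f_int) auto
  also have "\<dots> = 1 + 1/a" using f_one g_one f_int g_int
    by (subst Bochner_Integration.integral_add) (auto intro: integrable_divide_zero)
  finally show ?thesis .
qed

lemma Gm'_ge: "a > 0 \<Longrightarrow> Gm' a \<ge> gamma_fn mu f g a"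
  unfolding Gm'_def gamma_fn_def using f_nonneg
  by (intro mult_left_mono integral_mono_AE int_fi AE_I2) (auto simp: indicator_def)

lemma Gm'_le: "a > 0 \<Longrightarrow> r > 1 \<Longrightarrow> Gm' a \<le> gamma_fn mu f g (a/r) / r"
proof -
  assume a: "a > 0" and r: "r > 1"
  have "(\<integral>s. f s * indicator {s\<in>space mu. f s \<ge> a * g s} s \<partial>mu) \<le> (\<integral>s. f s * indicator {s\<in>space mu. f s > (a/r) * g s} s \<partial>mu)"
  proof (intro integral_mono_AE int_fi AE_I2)
    fix s assume s: "s \<in> space mu"
    show "f s * indicator {s\<in>space mu. f s \<ge> a * g s} s \<le> f s * indicator {s\<in>space mu. f s > (a/r) * g s} s"
    proof (cases "f s \<ge> a * g s \<and> f s > 0")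
      case True
      have "(a/r) * g s \<le> a * g s" using a r g_nonneg s
        by (intro mult_right_mono) (auto simp: field_simps)
      moreover have "(a/r) * g s < a * g s \<or> g s = 0" using a r g_nonneg s
        by (auto simp: field_simps)
      ultimately have "f s > (a/r) * g s" using True by auto
      then show ?thesis using True s by (auto simp: indicator_def)
    next
      case False then show ?thesis using f_nonneg s by (auto simp: indicator_def)
    qed
  qed measurable
  then show ?thesis unfolding Gm'_def gamma_fn_def using a r
    by (simp add: field_simps)
qed

lemma V_homog: "a > 0 \<Longrightarrow> t > 0 \<Longrightarrow> V (a * t) t = cc a / t"
proof -
  assume a: "a > 0" and t: "t > 0"
  have "V (a*t) t = (\<integral>s. max (f s / a) (g s) / t \<partial>mu)" unfolding V_def
    using a t by (intro Bochner_Integration.integral_cong) (auto simp: max_def field_simps)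
  also have "\<dots> = cc a / t" unfolding cc_def by simp
  finally show ?thesis .
qed

lemma V_ge: "y > 0 \<Longrightarrow> V x y \<ge> 1/y"
proof -
  assume y: "y > 0"
  have "(\<integral>s. g s / y \<partial>mu) \<le> V x y" unfolding V_def
    by (intro integral_mono_AE int_max integrable_divide_zero g_int AE_I2) auto
  then show ?thesis using g_one by simp
qed

lemma V_lip: "0 < b \<Longrightarrow> b \<le> b' \<Longrightarrow> V x b - V x b' \<le> 1/b - 1/b'"
proof -
  assume b: "0 < b" "b \<le> b'"
  have "V x b \<le> (\<integral>s. max (f s / x) (g s / b') + g s * (1/b - 1/b') \<partial>mu)" unfolding V_def
  proof (intro integral_mono_AE int_max Bochner_Integration.integrable_add integrable_mult_left g_int AE_I2)
    fix s assume "s \<in> space mu"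
    then have g0: "g s \<ge> 0" using g_nonneg by auto
    have "g s / b \<le> g s / b' + g s * (1/b - 1/b')" by (simp add: field_simps)
    moreover have "g s / b' \<le> g s / b" using b g0 by (intro divide_left_mono) auto
    ultimately show "max (f s / x) (g s / b) \<le> max (f s / x) (g s / b') + g s * (1/b - 1/b')"
      by (auto simp: max_def)
  qed
  also have "\<dots> = V x b' + (1/b - 1/b')" unfolding V_def using g_one
    by (subst Bochner_Integration.integral_add) (auto intro!: int_max integrable_mult_left g_int)
  finally show ?thesis by simp
qed

lemma V_up1:
  assumes a: "a > 0" and b: "b > 0" and h: "h \<ge> 0"
  shows "V (a*(b+h)) b \<le> Ag a / b + gamma_fn mu f g a / (b+h) + ((1/b - 1/(b+h))/a) * E1 a b h"
proof -
  let ?A = "{s\<in>space mu. f s \<le> a * g s}" and ?B = "{s\<in>space mu. f s > a * g s}"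
    and ?C = "{s\<in>space mu. a * g s < f s \<and> f s * b < a * g s * (b+h)}"
  have "V (a*(b+h)) b \<le> (\<integral>s. (g s * indicator ?A s) / b + (1/(a*(b+h))) * (f s * indicator ?B s)
       + ((1/b - 1/(b+h))/a) * (f s * indicator ?C s) \<partial>mu)" unfolding V_def
  proof (intro integral_mono_AE int_max Bochner_Integration.integrable_add integrable_mult_right
       integrable_divide_zero int_fi int_gi AE_I2)
    fix s assume s: "s \<in> space mu"
    have f0: "f s \<ge> 0" and g0: "g s \<ge> 0" using s f_nonneg g_nonneg by auto
    show "max (f s / (a * (b + h))) (g s / b) \<le> (g s * indicator ?A s) / b + (1/(a*(b+h))) * (f s * indicator ?B s)
       + ((1/b - 1/(b+h))/a) * (f s * indicator ?C s)"
    proof (cases "f s \<le> a * g s")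
      case True
      have "f s / (a * (b + h)) \<le> (a * g s) / (a * (b + h))" using True a b h
        by (intro divide_right_mono) auto
      also have "\<dots> = g s / (b + h)" using a by simp
      also have "\<dots> \<le> g s / b" using b h g0 by (intro divide_left_mono) auto
      finally have "f s / (a * (b + h)) \<le> g s / b" .
      then show ?thesis using True s by (simp add: indicator_def max_def)
    next
      case False
      show ?thesis
      proof (cases "f s * b < a * g s * (b+h)")
        case True
        have "f s / (a * (b + h)) \<le> f s / (a*b)" using a b h f0
          by (intro divide_left_mono mult_left_mono) auto
        moreover have "g s / b \<le> f s / (a*b)" using False a b by (simp add: field_simps)
        moreover have "(1/(a*(b+h))) * f s + ((1/b - 1/(b+h))/a) * f s = f s / (a*b)"
          using a b h by (simp add: divide_simps left_diff_distrib) (simp add: algebra_simps)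
        ultimately show ?thesis using True False s by (simp add: indicator_def max_def)
      next
        case False2: False
        have "g s / b \<le> f s / (a * (b + h))" using False2 a b h by (simp add: divide_simps) (simp add: algebra_simps)
        then show ?thesis using False False2 s by (simp add: indicator_def max_def)
      qed
    qed
  qed measurable
  also have "\<dots> = Ag a / b + gamma_fn mu f g a / (b+h) + ((1/b - 1/(b+h))/a) * E1 a b h"
  proof -
    have i1: "integrable mu (\<lambda>s. (g s * indicator ?A s) / b)" by (intro integrable_divide_zero int_gi) measurable
    have i2: "integrable mu (\<lambda>s. (1/(a*(b+h))) * (f s * indicator ?B s))" by (intro integrable_mult_right int_fi) measurable
    have i3: "integrable mu (\<lambda>s. ((1/b - 1/(b+h))/a) * (f s * indicator ?C s))" by (intro integrable_mult_right int_fi) measurable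
    show ?thesis
      unfolding Bochner_Integration.integral_add[OF Bochner_Integration.integrable_add[OF i1 i2] i3]
        Bochner_Integration.integral_add[OF i1 i2] integral_divide_zero integral_mult_right_zero
      unfolding Ag_def gamma_fn_def E1_def by simp
  qed
  finally show ?thesis .
qed

lemma V_up2:
  assumes a: "a > 0" and b: "b > 0" and h: "h \<ge> 0"
  shows "V (a*b) (b+h) \<le> Gm' a / b + Ag' a / (b+h) + (1/b - 1/(b+h)) * E2 a b h"
proof -
  let ?A = "{s\<in>space mu. f s < a * g s}" and ?B = "{s\<in>space mu. f s \<ge> a * g s}"
    and ?C = "{s\<in>space mu. f s < a * g s \<and> a * g s * b < f s * (b+h)}"
  have "V (a*b) (b+h) \<le> (\<integral>s. (1/(a*b)) * (f s * indicator ?B s) + (g s * indicator ?A s) / (b+h)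
       + (1/b - 1/(b+h)) * (g s * indicator ?C s) \<partial>mu)" unfolding V_def
  proof (intro integral_mono_AE int_max Bochner_Integration.integrable_add integrable_mult_right
       integrable_divide_zero int_fi int_gi AE_I2)
    fix s assume s: "s \<in> space mu"
    have f0: "f s \<ge> 0" and g0: "g s \<ge> 0" using s f_nonneg g_nonneg by auto
    show "max (f s / (a * b)) (g s / (b + h)) \<le> (1/(a*b)) * (f s * indicator ?B s) + (g s * indicator ?A s) / (b+h)
       + (1/b - 1/(b+h)) * (g s * indicator ?C s)"
    proof (cases "f s \<ge> a * g s")
      case True
      have "g s / (b + h) \<le> g s / b" using b h g0 by (intro divide_left_mono) auto
      moreover have "g s / b \<le> f s / (a * b)" using True a b by (simp add: field_simps)
      ultimately show ?thesis using True s by (simp add: indicator_def max_def)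
    next
      case False
      show ?thesis
      proof (cases "a * g s * b < f s * (b+h)")
        case True
        have "f s / (a*b) \<le> g s / b" using False a b by (simp add: field_simps)
        moreover have "g s / (b + h) \<le> g s / b" using b h g0 by (intro divide_left_mono) auto
        moreover have "g s / (b+h) + (1/b - 1/(b+h)) * g s = g s / b"
          by (simp add: left_diff_distrib)
        ultimately show ?thesis using True False s by (simp add: indicator_def max_def)
      next
        case False2: False
        have "f s / (a*b) \<le> g s / (b + h)" using False2 a b h by (simp add: field_simps)
        then show ?thesis using False False2 s by (simp add: indicator_def max_def)
      qed
    qed
  qed measurable
  also have "\<dots> = Gm' a / b + Ag' a / (b+h) + (1/b - 1/(b+h)) * E2 a b h"
  proof -
    have i1: "integrable mu (\<lambda>s. (1/(a*b)) * (f s * indicator ?B s))" by (intro integrable_mult_right int_fi) measurable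
    have i2: "integrable mu (\<lambda>s. (g s * indicator ?A s) / (b+h))" by (intro integrable_divide_zero int_gi) measurable
    have i3: "integrable mu (\<lambda>s. (1/b - 1/(b+h)) * (g s * indicator ?C s))" by (intro integrable_mult_right int_gi) measurable
    show ?thesis
      unfolding Bochner_Integration.integral_add[OF Bochner_Integration.integrable_add[OF i1 i2] i3]
        Bochner_Integration.integral_add[OF i1 i2] integral_divide_zero integral_mult_right_zero
      unfolding Ag'_def Gm'_def E2_def by simp
  qed
  finally show ?thesis .
qed

lemma E1_lim:
  assumes a: "a > 0" and b: "b > 0"
  shows "((\<lambda>h. E1 a b h) \<longlongrightarrow> 0) (at_right 0)"
proof -
  have "((\<lambda>t. E1 a b (inverse t)) \<longlongrightarrow> 0) at_top"
    unfolding E1_def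
  proof (rule integral_dominated_convergence_at_top[where w=f and f="\<lambda>_. 0" and s="(\<lambda>t s. f s * indicator {s \<in> space mu. a * g s < f s \<and> f s * b < a * g s * (b + inverse t)} s)", THEN tendsto_eq_rhs])
    show "integral\<^sup>L mu (\<lambda>_. 0) = (0::real)" by simp
    show "(\<lambda>_. 0::real) \<in> borel_measurable mu" by simp
    show "integrable mu f" by (rule f_int)
    show "(\<lambda>s. f s * indicator {s \<in> space mu. a * g s < f s \<and> f s * b < a * g s * (b + inverse t)} s) \<in> borel_measurable mu" for t
      by measurable
    show "\<forall>\<^sub>F t in at_top. AE s in mu. norm (f s * indicator {s \<in> space mu. a * g s < f s \<and> f s * b < a * g s * (b + inverse t)} s) \<le> f s"
      using f_nonneg by (intro always_eventually allI AE_I2) (auto simp: indicator_def)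
    show "AE s in mu. ((\<lambda>t. f s * indicator {s \<in> space mu. a * g s < f s \<and> f s * b < a * g s * (b + inverse t)} s) \<longlongrightarrow> 0) at_top"
    proof (rule AE_I2)
      fix s assume s: "s \<in> space mu"
      show "((\<lambda>t. f s * indicator {s \<in> space mu. a * g s < f s \<and> f s * b < a * g s * (b + inverse t)} s) \<longlongrightarrow> 0) at_top"
      proof (cases "a * g s < f s")
        case True
        have g0: "g s \<ge> 0" using s g_nonneg by auto
        have d: "(f s - a * g s) * b > 0" using True b by simp
        have "((\<lambda>t. a * g s * inverse t) \<longlongrightarrow> a * g s * 0) at_top"
          by (intro tendsto_mult tendsto_const tendsto_inverse_0_at_top filterlim_ident)
        then have "\<forall>\<^sub>F t in at_top. a * g s * inverse t < (f s - a * g s) * b"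
          using d by (auto simp: order_tendsto_iff)
        then have "\<forall>\<^sub>F t in at_top. f s * indicator {s \<in> space mu. a * g s < f s \<and> f s * b < a * g s * (b + inverse t)} s = 0"
          by eventually_elim (auto simp: indicator_def algebra_simps)
        then show ?thesis by (rule tendsto_eventually)
      next
        case False then show ?thesis by (simp add: indicator_def)
      qed
    qed
  qed
  then show ?thesis unfolding at_right_to_top filterlim_filtermap by simp
qed

lemma E2_lim:
  assumes a: "a > 0" and b: "b > 0"
  shows "((\<lambda>h. E2 a b h) \<longlongrightarrow> 0) (at_right 0)"
proof -
  have "((\<lambda>t. E2 a b (inverse t)) \<longlongrightarrow> 0) at_top"
    unfolding E2_def
  proof (rule integral_dominated_convergence_at_top[where w=g and f="\<lambda>_. 0" and s="(\<lambda>t s. g s * indicator {s \<in> space mu. f s < a * g s \<and> a * g s * b < f s * (b + inverse t)} s)", THEN tendsto_eq_rhs])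
    show "integral\<^sup>L mu (\<lambda>_. 0) = (0::real)" by simp
    show "(\<lambda>_. 0::real) \<in> borel_measurable mu" by simp
    show "integrable mu g" by (rule g_int)
    show "(\<lambda>s. g s * indicator {s \<in> space mu. f s < a * g s \<and> a * g s * b < f s * (b + inverse t)} s) \<in> borel_measurable mu" for t
      by measurable
    show "\<forall>\<^sub>F t in at_top. AE s in mu. norm (g s * indicator {s \<in> space mu. f s < a * g s \<and> a * g s * b < f s * (b + inverse t)} s) \<le> g s"
      using g_nonneg by (intro always_eventually allI AE_I2) (auto simp: indicator_def)
    show "AE s in mu. ((\<lambda>t. g s * indicator {s \<in> space mu. f s < a * g s \<and> a * g s * b < f s * (b + inverse t)} s) \<longlongrightarrow> 0) at_top"
    proof (rule AE_I2)
      fix s assume s: "s \<in> space mu"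
      show "((\<lambda>t. g s * indicator {s \<in> space mu. f s < a * g s \<and> a * g s * b < f s * (b + inverse t)} s) \<longlongrightarrow> 0) at_top"
      proof (cases "f s < a * g s")
        case True
        have d: "(a * g s - f s) * b > 0" using True b by simp
        have "((\<lambda>t. f s * inverse t) \<longlongrightarrow> f s * 0) at_top"
          by (intro tendsto_mult tendsto_const tendsto_inverse_0_at_top filterlim_ident)
        then have "\<forall>\<^sub>F t in at_top. f s * inverse t < (a * g s - f s) * b"
          using d by (auto simp: order_tendsto_iff)
        then have "\<forall>\<^sub>F t in at_top. g s * indicator {s \<in> space mu. f s < a * g s \<and> a * g s * b < f s * (b + inverse t)} s = 0"
          by eventually_elim (auto simp: indicator_def algebra_simps)
        then show ?thesis by (rule tendsto_eventually)
      next
        case False then show ?thesis by (simp add: indicator_def)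
      qed
    qed
  qed
  then show ?thesis unfolding at_right_to_top filterlim_filtermap by simp
qed

end


locale PR = AN mu f g + prob_space M
  for mu :: "'a measure" and f g :: "'a \<Rightarrow> real" and M :: "'w measure" +
  fixes X Y :: "'w \<Rightarrow> real"
  assumes Xm[measurable]: "X \<in> borel_measurable M" and Ym[measurable]: "Y \<in> borel_measurable M"
    and cdf: "\<forall>x>0. \<forall>y>0. measure M {\<omega> \<in> space M. X \<omega> \<le> x \<and> Y \<omega> \<le> y} = exp (- V x y)"
begin

definition "H x y = measure M {\<omega> \<in> space M. X \<omega> \<le> x \<and> Y \<omega> \<le> y}"
definition "Gf a b = measure M {\<omega> \<in> space M. X \<omega> \<le> a * Y \<omega> \<and> 0 < Y \<omega> \<and> Y \<omega> \<le> b}"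

lemma H_exp: "x > 0 \<Longrightarrow> y > 0 \<Longrightarrow> H x y = exp (- V x y)"
  using cdf unfolding H_def by auto

lemma H_diff: "0 < b \<Longrightarrow> b \<le> b' \<Longrightarrow> H x b' - H x b = measure M {\<omega> \<in> space M. X \<omega> \<le> x \<and> b < Y \<omega> \<and> Y \<omega> \<le> b'}"
proof -
  assume b: "0 < b" "b \<le> b'"
  have "measure M ({\<omega> \<in> space M. X \<omega> \<le> x \<and> Y \<omega> \<le> b'} - {\<omega> \<in> space M. X \<omega> \<le> x \<and> Y \<omega> \<le> b})
     = measure M {\<omega> \<in> space M. X \<omega> \<le> x \<and> Y \<omega> \<le> b'} - measure M {\<omega> \<in> space M. X \<omega> \<le> x \<and> Y \<omega> \<le> b}"
    using b by (intro finite_measure_Diff) (auto, measurable)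
  moreover have "{\<omega> \<in> space M. X \<omega> \<le> x \<and> Y \<omega> \<le> b'} - {\<omega> \<in> space M. X \<omega> \<le> x \<and> Y \<omega> \<le> b}
     = {\<omega> \<in> space M. X \<omega> \<le> x \<and> b < Y \<omega> \<and> Y \<omega> \<le> b'}" by auto
  ultimately show ?thesis unfolding H_def by simp
qed

lemma G_diff: "0 < b \<Longrightarrow> b \<le> b' \<Longrightarrow> Gf a b' - Gf a b = measure M {\<omega> \<in> space M. X \<omega> \<le> a * Y \<omega> \<and> b < Y \<omega> \<and> Y \<omega> \<le> b'}"
proof -
  assume b: "0 < b" "b \<le> b'"
  have "measure M ({\<omega> \<in> space M. X \<omega> \<le> a * Y \<omega> \<and> 0 < Y \<omega> \<and> Y \<omega> \<le> b'} - {\<omega> \<in> space M. X \<omega> \<le> a * Y \<omega> \<and> 0 < Y \<omega> \<and> Y \<omega> \<le> b})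
     = measure M {\<omega> \<in> space M. X \<omega> \<le> a * Y \<omega> \<and> 0 < Y \<omega> \<and> Y \<omega> \<le> b'} - measure M {\<omega> \<in> space M. X \<omega> \<le> a * Y \<omega> \<and> 0 < Y \<omega> \<and> Y \<omega> \<le> b}"
    using b by (intro finite_measure_Diff) (auto, measurable)
  moreover have "{\<omega> \<in> space M. X \<omega> \<le> a * Y \<omega> \<and> 0 < Y \<omega> \<and> Y \<omega> \<le> b'} - {\<omega> \<in> space M. X \<omega> \<le> a * Y \<omega> \<and> 0 < Y \<omega> \<and> Y \<omega> \<le> b}
     = {\<omega> \<in> space M. X \<omega> \<le> a * Y \<omega> \<and> b < Y \<omega> \<and> Y \<omega> \<le> b'}" using b by auto
  ultimately show ?thesis unfolding Gf_def by simp
qed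

lemma G_inc_up: "0 < a \<Longrightarrow> 0 < b \<Longrightarrow> b \<le> b' \<Longrightarrow> Gf a b' - Gf a b \<le> H (a*b') b' - H (a*b') b"
  unfolding G_diff H_diff
proof (intro finite_measure_mono)
  assume a: "0 < a"
  show "{\<omega> \<in> space M. X \<omega> \<le> a * Y \<omega> \<and> b < Y \<omega> \<and> Y \<omega> \<le> b'} \<subseteq> {\<omega> \<in> space M. X \<omega> \<le> a * b' \<and> b < Y \<omega> \<and> Y \<omega> \<le> b'}"
  proof safe
    fix \<omega> assume "X \<omega> \<le> a * Y \<omega>" "Y \<omega> \<le> b'"
    moreover have "a * Y \<omega> \<le> a * b'" using a \<open>Y \<omega> \<le> b'\<close> by simp
    ultimately show "X \<omega> \<le> a * b'" by linarith
  qed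
qed measurable

lemma G_inc_lo: "0 < a \<Longrightarrow> 0 < b \<Longrightarrow> b \<le> b' \<Longrightarrow> Gf a b' - Gf a b \<ge> H (a*b) b' - H (a*b) b"
  unfolding G_diff H_diff
proof (intro finite_measure_mono)
  assume a: "0 < a"
  show "{\<omega> \<in> space M. X \<omega> \<le> a * b \<and> b < Y \<omega> \<and> Y \<omega> \<le> b'} \<subseteq> {\<omega> \<in> space M. X \<omega> \<le> a * Y \<omega> \<and> b < Y \<omega> \<and> Y \<omega> \<le> b'}"
  proof safe
    fix \<omega> assume "X \<omega> \<le> a * b" "b < Y \<omega>"
    moreover have "a * b \<le> a * Y \<omega>" using a \<open>b < Y \<omega>\<close> by simp
    ultimately show "X \<omega> \<le> a * Y \<omega>" by linarith
  qed
qed measurable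

lemma V_pos: "y > 0 \<Longrightarrow> V x y > 0"
  using V_ge[of y x] by (smt (verit) divide_pos_pos)

lemma G_mono: "0 < b \<Longrightarrow> b \<le> b' \<Longrightarrow> Gf a b \<le> Gf a b'"
  using G_diff[of b b' a] measure_nonneg[of M "{\<omega> \<in> space M. X \<omega> \<le> a * Y \<omega> \<and> b < Y \<omega> \<and> Y \<omega> \<le> b'}"] by linarith

lemma G_nonneg: "Gf a b \<ge> 0" unfolding Gf_def by (rule measure_nonneg)

lemma G_lip: "0 < a \<Longrightarrow> 0 < b \<Longrightarrow> b \<le> b' \<Longrightarrow> Gf a b' - Gf a b \<le> 1/b - 1/b'"
proof -
  assume a: "0 < a" and b: "0 < b" "b \<le> b'"
  have b': "b' > 0" using b by simp
  have "Gf a b' - Gf a b \<le> exp (- V (a*b') b') - exp (- V (a*b') b)"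
    using G_inc_up[OF a b] H_exp a b b' by simp
  also have "\<dots> \<le> 1/b - 1/b'"
  proof (cases "V (a*b') b' \<le> V (a*b') b")
    case True
    then have "exp (- V (a*b') b') - exp (- V (a*b') b) \<le> V (a*b') b - V (a*b') b'"
      using V_pos[OF b'] by (intro exp_lip) (auto intro: less_imp_le)
    also have "\<dots> \<le> 1/b - 1/b'" using V_lip b by simp
    finally show ?thesis .
  next
    case False
    then have "exp (- V (a*b') b') - exp (- V (a*b') b) \<le> 0" by simp
    also have "0 \<le> 1/b - 1/b'" using b by (simp add: frac_le)
    finally show ?thesis .
  qed
  finally show ?thesis .
qed

lemma G_contin: "0 < a \<Longrightarrow> 0 < p \<Longrightarrow> continuous_on {p..q} (Gf a)"
proof (rule lipschitz_on_continuous_on[where L="1/p^2"], rule lipschitz_onI)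
  assume a: "0 < a" and p: "0 < p"
  show "0 \<le> 1/p^2" by simp
  have key: "\<bar>Gf a y - Gf a x\<bar> \<le> 1/p^2 * \<bar>y - x\<bar>" if "x \<in> {p..q}" "y \<in> {p..q}" "x \<le> y" for x y
  proof -
    have x: "x \<ge> p" "x > 0" using that p by auto
    have "\<bar>Gf a y - Gf a x\<bar> = Gf a y - Gf a x" using G_mono[of x y a] x that by simp
    also have "\<dots> \<le> 1/x - 1/y" using G_lip[OF a x(2) that(3)] .
    also have "1/x - 1/y = (y - x) / (x * y)" using x that by (simp add: field_simps)
    also have "\<dots> \<le> (y - x) / (p * p)" using x p that
      by (intro divide_left_mono mult_mono) auto
    finally show ?thesis using that by (simp add: power2_eq_square)
  qed
  fix x y assume "x \<in> {p..q}" "y \<in> {p..q}"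
  then show "dist (Gf a x) (Gf a y) \<le> 1/p^2 * dist x y"
    unfolding dist_real_def using key[of x y] key[of y x]
    by (cases "x \<le> y") (auto simp: abs_minus_commute)
qed

lemma G_upper:
  assumes a: "0 < a" and b: "0 < b"
  shows "Gf a b \<le> (Ag a / cc a) * exp (- cc a / b)"
proof -
  define c where "c = cc a"
  define A where "A = Ag a"
  define \<Gamma> where "\<Gamma> = gamma_fn mu f g a"
  have c: "c = A + \<Gamma>" "c \<ge> 1" "c > 0" using split1[OF a] cc_ge[of a] by (auto simp: c_def A_def \<Gamma>_def)
  have A0: "A \<ge> 0" using Ag_nonneg by (simp add: A_def)
  have G0: "\<Gamma> \<ge> 0" using gam_nonneg[OF a] by (simp add: \<Gamma>_def)
  define \<Phi> where "\<Phi> t = Gf a t - (A / c) * exp (- c / t)" for t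
  have step: "\<Phi> (t+h) - \<Phi> t \<le> (exp (-c/(t+h)) - exp (-(A/t + \<Gamma>/(t+h))) - (A/c)*(exp (-c/(t+h)) - exp (-c/t)))
      + ((1/t - 1/(t+h)) * (1/a)) * E1 a t h" if t: "t > 0" and h: "h > 0" for t h
  proof -
    have th: "t + h > 0" using t h by simp
    have k0: "(1/t - 1/(t+h)) * (1/a) \<ge> 0" using t h a by (simp add: frac_le)
    have E0: "E1 a t h \<ge> 0" unfolding E1_def by (rule intfi_ge0)
    have 1: "Gf a (t+h) - Gf a t \<le> H (a*(t+h)) (t+h) - H (a*(t+h)) t"
      using G_inc_up[OF a t] h by simp
    have 2: "H (a*(t+h)) (t+h) = exp (- (c/(t+h)))"
      using H_exp V_homog[OF a th] a th by (simp add: c_def)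
    have 3: "H (a*(t+h)) t = exp (- V (a*(t+h)) t)" using H_exp a th t by simp
    have 4: "exp (- V (a*(t+h)) t) \<ge> exp (-((A/t + \<Gamma>/(t+h)) + ((1/t - 1/(t+h)) * (1/a)) * E1 a t h))"
      using V_up1[OF a t, of h] h by (simp add: A_def \<Gamma>_def)
    have 5: "exp (-((A/t + \<Gamma>/(t+h)) + ((1/t - 1/(t+h)) * (1/a)) * E1 a t h))
      \<ge> exp (-(A/t + \<Gamma>/(t+h))) - ((1/t - 1/(t+h)) * (1/a)) * E1 a t h"
      using A0 G0 t th mult_nonneg_nonneg[OF k0 E0] by (intro exp_sub) auto
    have "Gf a (t+h) - Gf a t \<le> exp (- (c/(t+h))) - (exp (-(A/t + \<Gamma>/(t+h))) - ((1/t - 1/(t+h)) * (1/a)) * E1 a t h)"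
      using 1 2 3 4 5 by linarith
    then show ?thesis unfolding \<Phi>_def by (simp add: algebra_simps)
  qed
  have R: "\<exists>d>0. \<forall>h. 0 < h \<and> h < d \<longrightarrow> \<Phi> (t+h) \<le> \<Phi> t + e*h" if t: "t > 0" and e: "e > 0" for t e
  proof -
    let ?Q = "\<lambda>h. (exp (-c/(t+h)) - exp (-(A/t + \<Gamma>/(t+h))) - (A/c)*(exp (-c/(t+h)) - exp (-c/t)))
      + ((1/t - 1/(t+h)) * (1/a)) * E1 a t h"
    have "((\<lambda>h. ?Q h / h) \<longlongrightarrow> 0 + 0) (at_right 0)"
      unfolding add_divide_distrib
      by (intro tendsto_add Fp_lim kE_lim E1_lim c t a)
    then obtain d where d: "d > 0" "\<And>h. 0 < h \<and> h < d \<Longrightarrow> ?Q h \<le> e * h"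
      using rd_eps[of ?Q e] e by auto
    show ?thesis
    proof (intro exI[of _ d] conjI allI impI)
      fix h assume h: "0 < h \<and> h < d"
      show "\<Phi> (t+h) \<le> \<Phi> t + e*h" using step[OF t, of h] d(2)[OF h] h by simp
    qed (rule d(1))
  qed
  have bound: "\<Phi> b \<le> b0" if b0: "0 < b0" "b0 \<le> b" for b0
  proof -
    have "\<Phi> b \<le> \<Phi> b0"
    proof (rule dini_mono[OF b0(2)])
      show "continuous_on {b0..b} \<Phi>" unfolding \<Phi>_def
        using b0 by (intro continuous_intros G_contin a) auto
      show "\<exists>d>0. \<forall>h. 0 < h \<and> h < d \<longrightarrow> \<Phi> (t+h) \<le> \<Phi> t + e*h" if "t \<in> {b0..<b}" "e > 0" for t e
        using R that b0 by auto
    qed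
    also have "\<Phi> b0 \<le> Gf a b0" unfolding \<Phi>_def using A0 c by simp
    also have "Gf a b0 \<le> H (a*b0) b0"
      unfolding Gf_def H_def
    proof (intro finite_measure_mono)
      show "{\<omega> \<in> space M. X \<omega> \<le> a * Y \<omega> \<and> 0 < Y \<omega> \<and> Y \<omega> \<le> b0} \<subseteq> {\<omega> \<in> space M. X \<omega> \<le> a * b0 \<and> Y \<omega> \<le> b0}"
      proof safe
        fix \<omega> assume "X \<omega> \<le> a * Y \<omega>" "Y \<omega> \<le> b0"
        moreover have "a * Y \<omega> \<le> a * b0" using a \<open>Y \<omega> \<le> b0\<close> by simp
        ultimately show "X \<omega> \<le> a * b0" by linarith
      qed
    qed measurable
    also have "H (a*b0) b0 = exp (- c / b0)" using H_exp V_homog[OF a b0(1)] a b0 by (simp add: c_def)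
    also have "\<dots> \<le> b0 / c" using c b0 by (intro exp_small) auto
    also have "\<dots> \<le> b0" using c b0 by (simp add: divide_le_eq)
    finally show ?thesis .
  qed
  have "\<Phi> b \<le> 0"
  proof (rule field_le_epsilon)
    fix e :: real assume e: "e > 0"
    show "\<Phi> b \<le> 0 + e" using bound[of "min b e"] e b by auto
  qed
  then show ?thesis unfolding \<Phi>_def c_def A_def by simp
qed

lemma G_lower:
  assumes a: "0 < a" and b: "0 < b"
  shows "Gf a b \<ge> (Ag' a / cc a) * exp (- cc a / b)"
proof -
  define c where "c = cc a"
  define A where "A = Ag' a"
  define P where "P = Gm' a"
  have c: "c = P + A" "c \<ge> 1" "c > 0" using split2[OF a] cc_ge[of a] by (auto simp: c_def A_def P_def)
  have A0: "A \<ge> 0" using Ag'_nonneg by (simp add: A_def)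
  have P0: "P \<ge> 0" using gam_nonneg[OF a] Gm'_ge[OF a] by (simp add: P_def)
  have Ac: "A / c \<le> 1" using c P0 by simp
  define \<Phi> where "\<Phi> t = (A / c) * exp (- c / t) - Gf a t" for t
  have step: "\<Phi> (t+h) - \<Phi> t \<le> - (exp (-(P/t + A/(t+h))) - exp (-c/t) - (A/c)*(exp (-c/(t+h)) - exp (-c/t)))
      + ((1/t - 1/(t+h)) * 1) * E2 a t h" if t: "t > 0" and h: "h > 0" for t h
  proof -
    have th: "t + h > 0" using t h by simp
    have k0: "(1/t - 1/(t+h)) * 1 \<ge> 0" using t h a by (simp add: frac_le)
    have E0: "E2 a t h \<ge> 0" unfolding E2_def by (rule intgi_ge0)
    have 1: "Gf a (t+h) - Gf a t \<ge> H (a*t) (t+h) - H (a*t) t"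
      using G_inc_lo[OF a t] h by simp
    have 2: "H (a*t) t = exp (- (c/t))"
      using H_exp V_homog[OF a t] a t by (simp add: c_def)
    have 3: "H (a*t) (t+h) = exp (- V (a*t) (t+h))" using H_exp a th t by simp
    have 4: "exp (- V (a*t) (t+h)) \<ge> exp (-((P/t + A/(t+h)) + ((1/t - 1/(t+h)) * 1) * E2 a t h))"
      using V_up2[OF a t, of h] h by (simp add: A_def P_def)
    have 5: "exp (-((P/t + A/(t+h)) + ((1/t - 1/(t+h)) * 1) * E2 a t h))
      \<ge> exp (-(P/t + A/(t+h))) - ((1/t - 1/(t+h)) * 1) * E2 a t h"
      using A0 P0 t th mult_nonneg_nonneg[OF k0 E0] by (intro exp_sub) auto
    have "Gf a (t+h) - Gf a t \<ge> exp (-(P/t + A/(t+h))) - ((1/t - 1/(t+h)) * 1) * E2 a t h - exp (- (c/t))"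
      using 1 2 3 4 5 by linarith
    then show ?thesis unfolding \<Phi>_def by (simp add: algebra_simps)
  qed
  have R: "\<exists>d>0. \<forall>h. 0 < h \<and> h < d \<longrightarrow> \<Phi> (t+h) \<le> \<Phi> t + e*h" if t: "t > 0" and e: "e > 0" for t e
  proof -
    let ?Q = "\<lambda>h. - (exp (-(P/t + A/(t+h))) - exp (-c/t) - (A/c)*(exp (-c/(t+h)) - exp (-c/t)))
      + ((1/t - 1/(t+h)) * 1) * E2 a t h"
    have L: "((\<lambda>h. - (exp (-(P/t + A/(t+h))) - exp (-c/t) - (A/c)*(exp (-c/(t+h)) - exp (-c/t))) / h) \<longlongrightarrow> 0) (at_right 0)"
      using tendsto_minus[OF Fm_lim[OF c(1) c(3) t]] unfolding minus_divide_left minus_zero .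
    have "((\<lambda>h. ?Q h / h) \<longlongrightarrow> 0 + 0) (at_right 0)"
      unfolding add_divide_distrib
      by (intro tendsto_add L kE_lim E2_lim c t a)
    then obtain d where d: "d > 0" "\<And>h. 0 < h \<and> h < d \<Longrightarrow> ?Q h \<le> e * h"
      using rd_eps[of ?Q e] e by auto
    show ?thesis
    proof (intro exI[of _ d] conjI allI impI)
      fix h assume h: "0 < h \<and> h < d"
      show "\<Phi> (t+h) \<le> \<Phi> t + e*h" using step[OF t, of h] d(2)[OF h] h by simp
    qed (rule d(1))
  qed
  have bound: "\<Phi> b \<le> b0" if b0: "0 < b0" "b0 \<le> b" for b0
  proof -
    have "\<Phi> b \<le> \<Phi> b0"
    proof (rule dini_mono[OF b0(2)])
      show "continuous_on {b0..b} \<Phi>" unfolding \<Phi>_def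
        using b0 by (intro continuous_intros G_contin a) auto
      show "\<exists>d>0. \<forall>h. 0 < h \<and> h < d \<longrightarrow> \<Phi> (t+h) \<le> \<Phi> t + e*h" if "t \<in> {b0..<b}" "e > 0" for t e
        using R that b0 by auto
    qed
    also have "\<Phi> b0 \<le> (A / c) * exp (- c / b0)" unfolding \<Phi>_def using G_nonneg by simp
    also have "\<dots> \<le> 1 * exp (- c / b0)" using Ac by (intro mult_right_mono) auto
    also have "\<dots> \<le> b0 / c" using exp_small[of c b0] c b0 by simp
    also have "\<dots> \<le> b0" using c b0 by (simp add: divide_le_eq)
    finally show ?thesis .
  qed
  have "\<Phi> b \<le> 0"
  proof (rule field_le_epsilon)
    fix e :: real assume e: "e > 0"
    show "\<Phi> b \<le> 0 + e" using bound[of "min b e"] e b by auto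
  qed
  then show ?thesis unfolding \<Phi>_def c_def A_def by simp
qed

lemma Yneg_null: "{\<omega> \<in> space M. Y \<omega> \<le> 0} \<in> null_sets M"
proof -
  have eq: "{\<omega> \<in> space M. Y \<omega> \<le> 0} = (\<Union>m::nat. {\<omega> \<in> space M. X \<omega> \<le> real (Suc m) \<and> Y \<omega> \<le> 0})"
  proof safe
    fix \<omega> assume "\<omega> \<in> space M" "Y \<omega> \<le> 0"
    obtain m :: nat where "X \<omega> < real m" using reals_Archimedean2 by blast
    then show "\<omega> \<in> (\<Union>m::nat. {\<omega> \<in> space M. X \<omega> \<le> real (Suc m) \<and> Y \<omega> \<le> 0})"
      using \<open>\<omega> \<in> space M\<close> \<open>Y \<omega> \<le> 0\<close> by (auto intro!: exI[of _ m])
  qed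
  have "{\<omega> \<in> space M. X \<omega> \<le> real (Suc m) \<and> Y \<omega> \<le> 0} \<in> null_sets M" for m
  proof -
    let ?A = "{\<omega> \<in> space M. X \<omega> \<le> real (Suc m) \<and> Y \<omega> \<le> 0}"
    have "measure M ?A \<le> 0"
    proof (rule field_le_epsilon)
      fix e :: real assume e: "e > 0"
      have "measure M ?A \<le> H (real (Suc m)) e"
        unfolding H_def using e by (intro finite_measure_mono) (auto, measurable)
      also have "\<dots> = exp (- V (real (Suc m)) e)" using H_exp e by simp
      also have "\<dots> \<le> exp (- (1 / e))" using V_ge[OF e] by simp
      also have "\<dots> \<le> e / 1" using exp_small[of 1 e] e by simp
      finally show "measure M ?A \<le> 0 + e" by simp
    qed
    then have "measure M ?A = 0" using measure_nonneg[of M ?A] by linarith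
    then show ?thesis by (intro null_setsI) (auto simp: emeasure_eq_measure)
  qed
  then show ?thesis unfolding eq by blast
qed

lemma q_eq_G: assumes a: "a > 0" and b: "b > 0"
  shows "measure M {\<omega> \<in> space M. X \<omega> / Y \<omega> \<le> a \<and> Y \<omega> \<le> b} = Gf a b"
proof -
  let ?S = "{\<omega> \<in> space M. X \<omega> / Y \<omega> \<le> a \<and> Y \<omega> \<le> b}"
  let ?G = "{\<omega> \<in> space M. X \<omega> \<le> a * Y \<omega> \<and> 0 < Y \<omega> \<and> Y \<omega> \<le> b}"
  let ?N = "{\<omega> \<in> space M. X \<omega> / Y \<omega> \<le> a \<and> Y \<omega> \<le> b \<and> Y \<omega> \<le> 0}"
  have "?S = ?G \<union> ?N"
    by (auto simp: divide_le_eq mult.commute)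
  moreover have "?N \<in> null_sets M"
    by (rule null_sets_subset[OF Yneg_null]) (auto, measurable)
  ultimately have "measure M ?S = measure M ?G"
    by (simp add: measure_Un_null_set)
  then show ?thesis unfolding Gf_def .
qed

end


locale GAM =
  fixes \<gamma> :: "real \<Rightarrow> real"
  assumes pos: "\<And>t. t > 0 \<Longrightarrow> \<gamma> t > 0"
    and anti: "\<And>s t. 0 < s \<Longrightarrow> s \<le> t \<Longrightarrow> \<gamma> t \<le> \<gamma> s"
    and le: "\<And>t. t > 0 \<Longrightarrow> \<gamma> t \<le> 1/t"
begin

definition "Sset y = {s. 0 < s \<and> y \<le> 1 / \<gamma> s}"

lemma Sset_ne: "Sset y \<noteq> {}"
proof -
  let ?s = "max 1 y"
  have g: "\<gamma> ?s > 0" using pos[of ?s] by simp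
  have "\<gamma> ?s \<le> 1 / ?s" using le[of ?s] by simp
  then have "?s * \<gamma> ?s \<le> 1" by (simp add: le_divide_eq mult.commute split: if_splits)
  then have "?s \<le> 1 / \<gamma> ?s" using g by (simp add: le_divide_eq)
  then have "?s \<in> Sset y" unfolding Sset_def by simp
  then show ?thesis by auto
qed

lemma Sset_bdd: "bdd_below (Sset y)"
  unfolding Sset_def bdd_below_def by (auto intro: less_imp_le)

lemma linv_eq: "left_inv (\<lambda>s. 1 / \<gamma> s) y = Inf (Sset y)"
  unfolding left_inv_def Sset_def by simp

lemma Sset_mem_le: "s \<in> Sset y \<Longrightarrow> \<gamma> s \<le> 1 / y" if "y > 0"
proof -
  assume "s \<in> Sset y"
  then have s: "s > 0" "y \<le> 1 / \<gamma> s" by (auto simp: Sset_def)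
  then show ?thesis using pos[OF s(1)] that by (simp add: field_simps)
qed

lemma linv_up: assumes y: "y > 0" and e: "e > 0" and L: "Inf (Sset y) > 0"
  shows "\<gamma> (Inf (Sset y) * (1 + e)) \<le> 1 / y"
proof -
  have "Inf (Sset y) < Inf (Sset y) * (1 + e)" using L e by simp
  then obtain s where s: "s \<in> Sset y" "s < Inf (Sset y) * (1 + e)"
    using cInf_lessD[OF Sset_ne] by blast
  have "s > 0" using s by (auto simp: Sset_def)
  then have "\<gamma> (Inf (Sset y) * (1 + e)) \<le> \<gamma> s" using s by (intro anti) auto
  also have "\<dots> \<le> 1 / y" using Sset_mem_le[OF y s(1)] .
  finally show ?thesis .
qed

lemma linv_lo: assumes y: "y > 0" and e: "0 < e" "e < 1" and L: "Inf (Sset y) > 0"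
  shows "\<gamma> (Inf (Sset y) * (1 - e)) > 1 / y"
proof (rule ccontr)
  let ?t = "Inf (Sset y) * (1 - e)"
  assume "\<not> ?thesis"
  then have g: "\<gamma> ?t \<le> 1 / y" by simp
  have t: "?t > 0" using L e by simp
  have "y \<le> 1 / \<gamma> ?t" using g pos[OF t] y by (simp add: field_simps)
  then have "?t \<in> Sset y" using t by (simp add: Sset_def)
  then have "Inf (Sset y) \<le> ?t" using Sset_bdd by (rule cInf_lower)
  moreover have "0 < e * Inf (Sset y)" using L e by simp
  ultimately show False by (simp add: algebra_simps)
qed

lemma linv_big: assumes S0: "S0 > 0" and y: "y > 1 / \<gamma> S0"
  shows "Inf (Sset y) \<ge> S0"
proof (rule cInf_greatest[OF Sset_ne])
  fix s assume s: "s \<in> Sset y"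
  show "S0 \<le> s"
  proof (rule ccontr)
    assume "\<not> S0 \<le> s"
    then have "s \<le> S0" by simp
    moreover have "s > 0" using s by (simp add: Sset_def)
    ultimately have "\<gamma> S0 \<le> \<gamma> s" by (intro anti)
    then have "1 / \<gamma> s \<le> 1 / \<gamma> S0" using pos[OF \<open>s > 0\<close>] pos[OF S0] by (intro divide_left_mono) auto
    then show False using s y by (simp add: Sset_def)
  qed
qed

lemma rv_inv:
  fixes \<kappa> :: "real \<Rightarrow> real"
  assumes rv: "regvar_neg \<alpha> \<gamma>" and kap: "\<kappa> \<sim>[at_top] (\<lambda>t. left_inv (\<lambda>s. 1 / \<gamma> s) t)" and x: "x > 0"
  shows "((\<lambda>n::nat. real n * \<gamma> (\<kappa> (real n) * x)) \<longlongrightarrow> x powr (-\<alpha>)) sequentially"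
proof -
  define s where "s n = Inf (Sset (real n))" for n :: nat
  have s_inf: "filterlim s at_top sequentially"
    unfolding filterlim_at_top
  proof
    fix Z :: real
    define S0 where "S0 = max Z 1"
    have S0: "S0 > 0" by (simp add: S0_def)
    obtain N :: nat where N: "real N > 1 / \<gamma> S0" using reals_Archimedean2 by blast
    show "eventually (\<lambda>n. Z \<le> s n) sequentially"
      unfolding eventually_sequentially
    proof (intro exI allI impI)
      fix n assume "N \<le> n"
      then have "real n > 1 / \<gamma> S0" using N by (meson of_nat_le_iff order_less_le_trans)
      then have "s n \<ge> S0" unfolding s_def by (intro linv_big S0)
      then show "Z \<le> s n" by (simp add: S0_def)
    qed
  qed
  have spos: "eventually (\<lambda>n. s n > 0) sequentially"
    using filterlim_at_top_dense[THEN iffD1, OF s_inf, rule_format, of 0] by simp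
  have ratio: "((\<lambda>n. \<kappa> (real n) / s n) \<longlongrightarrow> 1) sequentially"
  proof -
    have "((\<lambda>n. (\<lambda>t. if \<kappa> t = 0 \<and> left_inv (\<lambda>s. 1 / \<gamma> s) t = 0 then 1 else \<kappa> t / left_inv (\<lambda>s. 1 / \<gamma> s) t) (real n)) \<longlongrightarrow> 1) sequentially"
      by (rule filterlim_compose[OF asymp_equivD[OF kap] filterlim_real_sequentially])
    moreover have "eventually (\<lambda>n. (\<lambda>t. if \<kappa> t = 0 \<and> left_inv (\<lambda>s. 1 / \<gamma> s) t = 0 then 1 else \<kappa> t / left_inv (\<lambda>s. 1 / \<gamma> s) t) (real n) = \<kappa> (real n) / s n) sequentially"
      using spos by eventually_elim (simp add: s_def linv_eq)
    ultimately show ?thesis by (rule Lim_transform_eventually)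
  qed
  have rvs: "((\<lambda>n. \<gamma> (s n * c) / \<gamma> (s n)) \<longlongrightarrow> c powr (-\<alpha>)) sequentially" if "c > 0" for c
    using filterlim_compose[OF rv[unfolded regvar_neg_def, rule_format, OF that] s_inf] .
  show ?thesis
  proof (rule tendstoI)
    fix e :: real assume e: "e > 0"
    define up where "up \<epsilon> = ((1-\<epsilon>)*x) powr (-\<alpha>) / (1+\<epsilon>) powr (-\<alpha>)" for \<epsilon> :: real
    define lo where "lo \<epsilon> = ((1+\<epsilon>)*x) powr (-\<alpha>) / (1-\<epsilon>) powr (-\<alpha>)" for \<epsilon> :: real
    have "(up \<longlongrightarrow> ((1-0)*x) powr (-\<alpha>) / (1+0) powr (-\<alpha>)) (at_right 0)"
      unfolding up_def using x by (intro tendsto_intros) auto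
    then have upl: "(up \<longlongrightarrow> x powr (-\<alpha>)) (at_right 0)" by simp
    have "(lo \<longlongrightarrow> ((1+0)*x) powr (-\<alpha>) / (1-0) powr (-\<alpha>)) (at_right 0)"
      unfolding lo_def using x by (intro tendsto_intros) auto
    then have lol: "(lo \<longlongrightarrow> x powr (-\<alpha>)) (at_right 0)" by simp
    have "eventually (\<lambda>\<epsilon>. up \<epsilon> < x powr (-\<alpha>) + e/2 \<and> lo \<epsilon> > x powr (-\<alpha>) - e/2) (at_right 0)"
      using order_tendstoD(2)[OF upl, of "x powr (-\<alpha>) + e/2"] order_tendstoD(1)[OF lol, of "x powr (-\<alpha>) - e/2"] e
      by (auto elim: eventually_elim2)
    then obtain b where b: "b > 0" "\<And>\<epsilon>. \<epsilon> > 0 \<Longrightarrow> \<epsilon> < b \<Longrightarrow> up \<epsilon> < x powr (-\<alpha>) + e/2 \<and> lo \<epsilon> > x powr (-\<alpha>) - e/2"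
      unfolding eventually_at_right_field by auto
    define \<epsilon> where "\<epsilon> = min (b/2) (1/2)"
    have eps: "0 < \<epsilon>" "\<epsilon> < 1" "\<epsilon> \<le> 1/2" using b by (auto simp: \<epsilon>_def)
    have ue: "up \<epsilon> < x powr (-\<alpha>) + e/2" and le': "lo \<epsilon> > x powr (-\<alpha>) - e/2" using b eps by (auto simp: \<epsilon>_def)
    have c1: "(1-\<epsilon>)*x > 0" "(1+\<epsilon>) > 0" "(1+\<epsilon>)*x > 0" "1 - \<epsilon> > 0" using eps x by auto
    have U: "((\<lambda>n. (\<gamma> (s n * ((1-\<epsilon>)*x)) / \<gamma> (s n)) / (\<gamma> (s n * (1+\<epsilon>)) / \<gamma> (s n))) \<longlongrightarrow> up \<epsilon>) sequentially"
      unfolding up_def using c1 by (intro tendsto_divide rvs) auto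
    have L: "((\<lambda>n. (\<gamma> (s n * ((1+\<epsilon>)*x)) / \<gamma> (s n)) / (\<gamma> (s n * (1-\<epsilon>)) / \<gamma> (s n))) \<longlongrightarrow> lo \<epsilon>) sequentially"
      unfolding lo_def using c1 by (intro tendsto_divide rvs) auto
    have ev1: "eventually (\<lambda>n. (\<gamma> (s n * ((1-\<epsilon>)*x)) / \<gamma> (s n)) / (\<gamma> (s n * (1+\<epsilon>)) / \<gamma> (s n)) < x powr (-\<alpha>) + e) sequentially"
      using order_tendstoD(2)[OF U, of "x powr (-\<alpha>) + e"] ue e by simp
    have ev2: "eventually (\<lambda>n. (\<gamma> (s n * ((1+\<epsilon>)*x)) / \<gamma> (s n)) / (\<gamma> (s n * (1-\<epsilon>)) / \<gamma> (s n)) > x powr (-\<alpha>) - e) sequentially"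
      using order_tendstoD(1)[OF L, of "x powr (-\<alpha>) - e"] le' e by simp
    have ev3: "eventually (\<lambda>n. \<bar>\<kappa> (real n) / s n - 1\<bar> < \<epsilon>) sequentially"
      using tendstoD[OF ratio eps(1)] by (simp add: dist_real_def)
    have ev4: "eventually (\<lambda>n. n \<ge> 1) sequentially" by (rule eventually_ge_at_top)
    show "eventually (\<lambda>n. dist (real n * \<gamma> (\<kappa> (real n) * x)) (x powr (-\<alpha>)) < e) sequentially"
      using ev1 ev2 ev3 ev4 spos
    proof eventually_elim
      case (elim n)
      have sn: "s n > 0" using elim by simp
      have nn: "real n > 0" using elim by simp
      have gs: "\<gamma> (s n) > 0" using pos[OF sn] .
      have kb: "(1 - \<epsilon>) * s n \<le> \<kappa> (real n)" "\<kappa> (real n) \<le> (1 + \<epsilon>) * s n"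
        using elim(3) sn by (auto simp: abs_less_iff field_simps)
      have k1: "s n * ((1-\<epsilon>)*x) \<le> \<kappa> (real n) * x" using mult_right_mono[OF kb(1), of x] x by (simp add: algebra_simps)
      have k2: "\<kappa> (real n) * x \<le> s n * ((1+\<epsilon>)*x)" using mult_right_mono[OF kb(2), of x] x by (simp add: algebra_simps)
      have p1: "s n * ((1-\<epsilon>)*x) > 0" using sn c1 by simp
      have g1: "\<gamma> (\<kappa> (real n) * x) \<le> \<gamma> (s n * ((1-\<epsilon>)*x))" using anti[OF p1 k1] .
      have g2: "\<gamma> (s n * ((1+\<epsilon>)*x)) \<le> \<gamma> (\<kappa> (real n) * x)" using anti[OF _ k2] p1 k1 by simp
      have a1: "\<gamma> (s n * (1+\<epsilon>)) \<le> 1 / real n"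
        using linv_up[OF nn eps(1)] sn by (simp add: s_def)
      have a2: "\<gamma> (s n * (1-\<epsilon>)) > 1 / real n"
        using linv_lo[OF nn eps(1) eps(2)] sn by (simp add: s_def)
      have q1: "\<gamma> (s n * (1+\<epsilon>)) > 0" using pos c1 sn by simp
      have q2: "\<gamma> (s n * (1-\<epsilon>)) > 0" using pos c1 sn by simp
      have q3: "\<gamma> (\<kappa> (real n) * x) \<ge> 0" using pos[of "\<kappa> (real n) * x"] p1 k1 by simp
      have "real n * \<gamma> (\<kappa> (real n) * x) \<le> (1 / \<gamma> (s n * (1+\<epsilon>))) * \<gamma> (s n * ((1-\<epsilon>)*x))"
      proof (rule mult_mono)
        show "real n \<le> 1 / \<gamma> (s n * (1+\<epsilon>))" using a1 q1 nn by (simp add: field_simps)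
      qed (use g1 q1 q3 in auto)
      also have "\<dots> = (\<gamma> (s n * ((1-\<epsilon>)*x)) / \<gamma> (s n)) / (\<gamma> (s n * (1+\<epsilon>)) / \<gamma> (s n))"
        using gs by simp
      finally have B1: "real n * \<gamma> (\<kappa> (real n) * x) < x powr (-\<alpha>) + e" using elim(1) by linarith
      have "(\<gamma> (s n * ((1+\<epsilon>)*x)) / \<gamma> (s n)) / (\<gamma> (s n * (1-\<epsilon>)) / \<gamma> (s n)) = (1 / \<gamma> (s n * (1-\<epsilon>))) * \<gamma> (s n * ((1+\<epsilon>)*x))"
        using gs by simp
      also have "\<dots> \<le> real n * \<gamma> (\<kappa> (real n) * x)"
      proof (rule mult_mono)
        show "1 / \<gamma> (s n * (1-\<epsilon>)) \<le> real n" using a2 q2 nn by (simp add: field_simps)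
        show "0 \<le> \<gamma> (s n * ((1 + \<epsilon>) * x))" using pos[of "s n * ((1 + \<epsilon>) * x)"] sn c1 by simp
      qed (use g2 nn in auto)
      finally have B2: "real n * \<gamma> (\<kappa> (real n) * x) > x powr (-\<alpha>) - e" using elim(2) by linarith
      show ?case using B1 B2 by (simp add: dist_real_def abs_less_iff)
    qed
  qed
qed

lemma kap_pos:
  fixes \<kappa> :: "real \<Rightarrow> real"
  assumes kap: "\<kappa> \<sim>[at_top] (\<lambda>t. left_inv (\<lambda>s. 1 / \<gamma> s) t)"
  shows "eventually (\<lambda>n::nat. \<kappa> (real n) > 0) sequentially"
proof -
  define s where "s n = Inf (Sset (real n))" for n :: nat
  obtain N :: nat where N: "real N > 1 / \<gamma> 1" using reals_Archimedean2 by blast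
  have spos: "eventually (\<lambda>n. s n > 0) sequentially"
    unfolding eventually_sequentially
  proof (intro exI allI impI)
    fix n assume "N \<le> n"
    then have "real n > 1 / \<gamma> 1" using N by (meson of_nat_le_iff order_less_le_trans)
    then have "s n \<ge> 1" unfolding s_def by (intro linv_big) auto
    then show "s n > 0" by simp
  qed
  have ratio: "((\<lambda>n. \<kappa> (real n) / s n) \<longlongrightarrow> 1) sequentially"
  proof -
    have "((\<lambda>n. (\<lambda>t. if \<kappa> t = 0 \<and> left_inv (\<lambda>s. 1 / \<gamma> s) t = 0 then 1 else \<kappa> t / left_inv (\<lambda>s. 1 / \<gamma> s) t) (real n)) \<longlongrightarrow> 1) sequentially"
      by (rule filterlim_compose[OF asymp_equivD[OF kap] filterlim_real_sequentially])
    moreover have "eventually (\<lambda>n. (\<lambda>t. if \<kappa> t = 0 \<and> left_inv (\<lambda>s. 1 / \<gamma> s) t = 0 then 1 else \<kappa> t / left_inv (\<lambda>s. 1 / \<gamma> s) t) (real n) = \<kappa> (real n) / s n) sequentially"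
      using spos by eventually_elim (simp add: s_def linv_eq)
    ultimately show ?thesis by (rule Lim_transform_eventually)
  qed
  have "eventually (\<lambda>n. \<kappa> (real n) / s n > 0) sequentially"
    using order_tendstoD(1)[OF ratio, of 0] by simp
  then show ?thesis using spos by eventually_elim (simp add: zero_less_divide_iff)
qed

end


context AN begin

lemma gam_pos:
  assumes supp: "\<forall>t>0. emeasure mu {s \<in> space mu. f s > t * g s} > 0" and t: "t > 0"
  shows "gamma_fn mu f g t > 0"
proof -
  let ?A = "{s \<in> space mu. f s > t * g s}"
  have i: "integrable mu (\<lambda>s. f s * indicator ?A s)" by (intro int_fi) measurable
  have "(\<integral>s. f s * indicator ?A s \<partial>mu) \<noteq> 0"
  proof
    assume "(\<integral>s. f s * indicator ?A s \<partial>mu) = 0"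
    then have "AE s in mu. f s * indicator ?A s = 0"
      using integral_nonneg_eq_0_iff_AE[OF i] f_nonneg by (auto simp: indicator_def intro!: AE_I2)
    then have "AE s in mu. \<not> (f s > t * g s)"
    proof (rule AE_mp[OF _ AE_I2], intro impI notI)
      fix s assume s: "s \<in> space mu" and z: "f s * indicator ?A s = 0" and lt: "f s > t * g s"
      have "t * g s \<ge> 0" using g_nonneg s t by simp
      then have "f s > 0" using lt by simp
      then show False using z s lt by (simp add: indicator_def)
    qed
    then have "emeasure mu ?A = 0" by (rule emeasure_eq_0_AE)
    then show False using supp t by auto
  qed
  then have "(\<integral>s. f s * indicator ?A s \<partial>mu) > 0" using intfi_ge0[of ?A] by linarith
  then show ?thesis unfolding gamma_fn_def using t by simp
qed

lemma gam_anti: "0 < s \<Longrightarrow> s \<le> t \<Longrightarrow> gamma_fn mu f g t \<le> gamma_fn mu f g s"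
proof -
  assume st: "0 < s" "s \<le> t"
  have "(\<integral>x. f x * indicator {x \<in> space mu. f x > t * g x} x \<partial>mu) \<le> (\<integral>x. f x * indicator {x \<in> space mu. f x > s * g x} x \<partial>mu)"
  proof (intro integral_mono_AE int_fi AE_I2)
    fix x assume x: "x \<in> space mu"
    have "s * g x \<le> t * g x" using st g_nonneg x by (intro mult_right_mono) auto
    then show "f x * indicator {x \<in> space mu. f x > t * g x} x \<le> f x * indicator {x \<in> space mu. f x > s * g x} x"
      using f_nonneg x by (auto simp: indicator_def)
  qed measurable
  moreover have "1/t \<le> 1/s" using st by (simp add: frac_le)
  ultimately show ?thesis unfolding gamma_fn_def using st
    by (intro mult_mono intfi_ge0) auto
qed

lemma GAM: assumes supp: "\<forall>t>0. emeasure mu {s \<in> space mu. f s > t * g s} > 0"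
  shows "GAM (gamma_fn mu f g)"
  by unfold_locales (use gam_pos[OF supp] gam_anti gam_le in auto)

end


context AN begin

lemma Gm'_lim:
  fixes \<kappa> :: "real \<Rightarrow> real"
  assumes supp: "\<forall>t>0. emeasure mu {s \<in> space mu. f s > t * g s} > 0"
    and rv: "regvar_neg \<alpha> (gamma_fn mu f g)"
    and kap: "\<kappa> \<sim>[at_top] (\<lambda>t. left_inv (\<lambda>s. 1 / gamma_fn mu f g s) t)" and x: "x > 0"
  shows "((\<lambda>n::nat. real n * Gm' (\<kappa> (real n) * x)) \<longlongrightarrow> x powr (-\<alpha>)) sequentially"
proof (rule tendstoI)
  interpret G: GAM "gamma_fn mu f g" by (rule GAM[OF supp])
  fix e :: real assume e: "e > 0"
  have kp: "eventually (\<lambda>n::nat. \<kappa> (real n) > 0) sequentially" by (rule G.kap_pos[OF kap])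
  have L0: "((\<lambda>n::nat. real n * gamma_fn mu f g (\<kappa> (real n) * x)) \<longlongrightarrow> x powr (-\<alpha>)) sequentially"
    by (rule G.rv_inv[OF rv kap x])
  have "((\<lambda>r. (x/r) powr (-\<alpha>) / r) \<longlongrightarrow> (x/1) powr (-\<alpha>) / 1) (at_right 1)"
    using x by (intro tendsto_intros) auto
  then have "eventually (\<lambda>r. (x/r) powr (-\<alpha>) / r < x powr (-\<alpha>) + e/2) (at_right 1)"
    using e by (intro order_tendstoD(2)) auto
  then obtain b where b: "b > 1" "\<And>r. r > 1 \<Longrightarrow> r < b \<Longrightarrow> (x/r) powr (-\<alpha>) / r < x powr (-\<alpha>) + e/2"
    unfolding eventually_at_right_field by auto
  define r where "r = (1 + b) / 2"
  have r1: "r > 1" "r < b" using b by (auto simp: r_def)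
  have r: "r > 1" "(x/r) powr (-\<alpha>) / r < x powr (-\<alpha>) + e/2" using r1 b(2)[OF r1] by auto
  have xr: "x / r > 0" using x r by simp
  have "((\<lambda>n::nat. real n * gamma_fn mu f g (\<kappa> (real n) * (x/r)) / r) \<longlongrightarrow> (x/r) powr (-\<alpha>) / r) sequentially"
    using r by (intro tendsto_divide G.rv_inv[OF rv kap xr] tendsto_const) auto
  then have ev1: "eventually (\<lambda>n::nat. real n * gamma_fn mu f g (\<kappa> (real n) * (x/r)) / r < x powr (-\<alpha>) + e) sequentially"
    using r(2) e by (intro order_tendstoD(2)) auto
  have ev2: "eventually (\<lambda>n::nat. real n * gamma_fn mu f g (\<kappa> (real n) * x) > x powr (-\<alpha>) - e) sequentially"
    using e by (intro order_tendstoD(1)[OF L0]) auto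
  show "eventually (\<lambda>n::nat. dist (real n * Gm' (\<kappa> (real n) * x)) (x powr (-\<alpha>)) < e) sequentially"
    using ev1 ev2 kp
  proof eventually_elim
    case (elim n)
    have a: "\<kappa> (real n) * x > 0" using elim x by simp
    have 1: "real n * gamma_fn mu f g (\<kappa> (real n) * x) \<le> real n * Gm' (\<kappa> (real n) * x)"
      using Gm'_ge[OF a] by (intro mult_left_mono) auto
    have eq: "\<kappa> (real n) * x / r = \<kappa> (real n) * (x / r)" by simp
    have "real n * Gm' (\<kappa> (real n) * x) \<le> real n * (gamma_fn mu f g (\<kappa> (real n) * x / r) / r)"
      using Gm'_le[OF a r(1)] by (intro mult_left_mono) auto
    also have "\<dots> = real n * gamma_fn mu f g (\<kappa> (real n) * (x/r)) / r" unfolding eq by simp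
    finally have 2: "real n * Gm' (\<kappa> (real n) * x) \<le> real n * gamma_fn mu f g (\<kappa> (real n) * (x/r)) / r" .
    have l: "real n * Gm' (\<kappa> (real n) * x) > x powr (-\<alpha>) - e" using 1 elim(2) by linarith
    have u: "real n * Gm' (\<kappa> (real n) * x) < x powr (-\<alpha>) + e" using 2 elim(1) by linarith
    show ?case using l u by (simp add: dist_real_def abs_less_iff)
  qed
qed

end

lemma fst_bm[measurable]: "(fst :: real \<times> real \<Rightarrow> real) \<in> borel_measurable borel"
  by (intro borel_measurable_continuous_onI continuous_intros)
lemma snd_bm[measurable]: "(snd :: real \<times> real \<Rightarrow> real) \<in> borel_measurable borel"
  by (intro borel_measurable_continuous_onI continuous_intros)

theorem proposition2:
  fixes mu :: "'a::polish_space measure"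
    and f g :: "'a \<Rightarrow> real"
    and M :: "'w measure"
    and Xs Ys :: "nat \<Rightarrow> 'w \<Rightarrow> real"
    and \<alpha> :: real
    and \<kappa> :: "real \<Rightarrow> real"
  assumes S_borel: "sets mu = sets borel"
    and sfin: "sigma_finite_measure mu"
    and f_meas: "f \<in> borel_measurable mu" and g_meas: "g \<in> borel_measurable mu"
    and f_nonneg: "\<forall>s\<in>space mu. f s \<ge> 0" and g_nonneg: "\<forall>s\<in>space mu. g s \<ge> 0"
    and f_int: "integrable mu f" and g_int: "integrable mu g"
    and f_one: "(\<integral>s. f s \<partial>mu) = 1" and g_one: "(\<integral>s. g s \<partial>mu) = 1"
    and P: "prob_space M"
    and rvX: "\<forall>i\<ge>1. Xs i \<in> borel_measurable M"
    and rvY: "\<forall>i\<ge>1. Ys i \<in> borel_measurable M"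
    and indep: "prob_space.indep_vars M (\<lambda>_. borel) (\<lambda>i \<omega>. (Xs i \<omega>, Ys i \<omega>)) {1..}"
    and cdf: "\<forall>i\<ge>1. \<forall>x>0. \<forall>y>0.
       measure M {\<omega> \<in> space M. Xs i \<omega> \<le> x \<and> Ys i \<omega> \<le> y}
         = exp (- (\<integral>s. max (f s / x) (g s / y) \<partial>mu))"
    and supp: "\<forall>t>0. emeasure mu {s \<in> space mu. f s > t * g s} > 0"
    and rv: "regvar_neg \<alpha> (gamma_fn mu f g)"
    and kappa: "\<kappa> \<sim>[at_top] (\<lambda>t. left_inv (\<lambda>s. 1 / gamma_fn mu f g s) t)"
  shows "\<forall>x>0. \<forall>y>0.
    ((\<lambda>n::nat. measure M {\<omega> \<in> space M.
        (MAX i\<in>{1..n}. Xs i \<omega> / Ys i \<omega>) / \<kappa> (real n) \<le> x \<and>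
        (MAX i\<in>{1..n}. Ys i \<omega>) / real n \<le> y})
      \<longlongrightarrow> exp (- (x powr (- \<alpha>))) * exp (- (y powr (-1)))) sequentially"
proof (intro allI impI)
  fix x y :: real assume x: "x > 0" and y: "y > 0"
  have ANf: "AN mu f g" by (unfold_locales) (use f_meas g_meas f_nonneg g_nonneg f_int g_int f_one g_one in auto)
  interpret AN mu f g by (rule ANf)
  interpret pm: prob_space M by (rule P)
  have PRi: "PR mu f g M (Xs i) (Ys i)" if i: "i \<ge> 1" for i
  proof (intro PR.intro ANf P PR_axioms.intro)
    show "Xs i \<in> borel_measurable M" "Ys i \<in> borel_measurable M" using rvX rvY i by auto
    show "\<forall>x>0. \<forall>y>0. measure M {\<omega> \<in> space M. Xs i \<omega> \<le> x \<and> Ys i \<omega> \<le> y} = exp (- V x y)"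
      using cdf i by (simp add: V_def)
  qed
  interpret GG: GAM "gamma_fn mu f g" by (rule GAM[OF supp])
  define a where "a n = \<kappa> (real n) * x" for n :: nat
  define c where "c n = cc (a n)" for n
  define G where "G n = gamma_fn mu f g (a n)" for n
  define G' where "G' n = Gm' (a n)" for n
  define Up where "Up n = ((c n - G n) / c n) * exp (- c n / (real n * y))" for n
  define Lo where "Lo n = ((c n - G' n) / c n) * exp (- c n / (real n * y))" for n
  have kp: "eventually (\<lambda>n::nat. \<kappa> (real n) > 0) sequentially" by (rule GG.kap_pos[OF kappa])
  have ap: "eventually (\<lambda>n. a n > 0) sequentially" using kp by eventually_elim (use x in \<open>simp add: a_def\<close>)
  have nG: "((\<lambda>n. real n * G n) \<longlongrightarrow> x powr (-\<alpha>)) sequentially"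
    using GG.rv_inv[OF rv kappa x] by (simp add: G_def a_def)
  have nG': "((\<lambda>n. real n * G' n) \<longlongrightarrow> x powr (-\<alpha>)) sequentially"
    using Gm'_lim[OF supp rv kappa x] by (simp add: G'_def a_def)
  have c1: "c n \<ge> 1" for n by (simp add: c_def cc_ge)
  have cl: "(c \<longlongrightarrow> 1) sequentially"
  proof (rule tendsto_sandwich[where f="\<lambda>_. 1" and h="\<lambda>n. 1 + G n"])
    show "eventually (\<lambda>n. 1 \<le> c n) sequentially" using c1 by simp
    show "eventually (\<lambda>n. c n \<le> 1 + G n) sequentially" using ap
    proof eventually_elim
      case (elim n)
      have "Ag (a n) \<le> 1" unfolding Ag_def by (intro intgi_le1) measurable
      then show ?case using split1[OF elim] by (simp add: c_def G_def)
    qed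
    have "((\<lambda>n. 1 + G n) \<longlongrightarrow> 1 + 0) sequentially" by (intro tendsto_intros div_n_lim[OF nG])
    then show "((\<lambda>n. 1 + G n) \<longlongrightarrow> 1) sequentially" by simp
  qed simp
  have UpL: "((\<lambda>n. Up n ^ n) \<longlongrightarrow> exp (- (x powr (-\<alpha>) + 1/y))) sequentially"
  proof (rule pow_lim)
    show "((\<lambda>n. real n * (1 - Up n)) \<longlongrightarrow> x powr (-\<alpha>) + 1/y) sequentially"
      unfolding Up_def by (rule num_lim[OF cl c1 nG y])
    show "eventually (\<lambda>n. Up n \<le> 1) sequentially" using ap
    proof eventually_elim
      case (elim n)
      have "c n - G n = Ag (a n)" using split1[OF elim] by (simp add: c_def G_def)
      then have "0 \<le> c n - G n" "c n - G n \<le> c n" using Ag_nonneg[of "a n"] gam_nonneg[OF elim] by (auto simp: G_def)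
      then have "(c n - G n) / c n \<le> 1" using c1[of n] by simp
      moreover have "exp (- c n / (real n * y)) \<le> 1" using c1[of n] y by simp
      moreover have "(c n - G n) / c n \<ge> 0" using c1[of n] \<open>0 \<le> c n - G n\<close> by simp
      ultimately show ?case unfolding Up_def by (intro mult_le_one) auto
    qed
  qed
  have LoL: "((\<lambda>n. Lo n ^ n) \<longlongrightarrow> exp (- (x powr (-\<alpha>) + 1/y))) sequentially"
  proof (rule pow_lim)
    show "((\<lambda>n. real n * (1 - Lo n)) \<longlongrightarrow> x powr (-\<alpha>) + 1/y) sequentially"
      unfolding Lo_def by (rule num_lim[OF cl c1 nG' y])
    show "eventually (\<lambda>n. Lo n \<le> 1) sequentially" using ap
    proof eventually_elim
      case (elim n)
      have "c n - G' n = Ag' (a n)" using split2[OF elim] by (simp add: c_def G'_def)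
      then have "0 \<le> c n - G' n" "c n - G' n \<le> c n" using Ag'_nonneg[of "a n"] gam_nonneg[OF elim] Gm'_ge[OF elim] by (auto simp: G'_def)
      then have "(c n - G' n) / c n \<le> 1" using c1[of n] by simp
      moreover have "exp (- c n / (real n * y)) \<le> 1" using c1[of n] y by simp
      moreover have "(c n - G' n) / c n \<ge> 0" using c1[of n] \<open>0 \<le> c n - G' n\<close> by simp
      ultimately show ?case unfolding Lo_def by (intro mult_le_one) auto
    qed
  qed
  have indsets: "pm.indep_sets (\<lambda>i. {(\<lambda>\<omega>. (Xs i \<omega>, Ys i \<omega>)) -` A \<inter> space M | A. A \<in> sets borel}) {1..}"
    using indep unfolding pm.indep_vars_def2 by auto
  define Pn where "Pn n = measure M {\<omega> \<in> space M.
        (MAX i\<in>{1..n}. Xs i \<omega> / Ys i \<omega>) / \<kappa> (real n) \<le> x \<and>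
        (MAX i\<in>{1..n}. Ys i \<omega>) / real n \<le> y}" for n :: nat
  have key: "eventually (\<lambda>n. Lo n ^ n \<le> Pn n \<and> Pn n \<le> Up n ^ n) sequentially"
    using ap kp eventually_ge_at_top[of "1::nat"]
  proof eventually_elim
    case (elim n)
    have an: "a n > 0" and kn: "\<kappa> (real n) > 0" and n1: "n \<ge> 1" using elim by auto
    define b where "b = real n * y"
    have bp: "b > 0" using n1 y by (simp add: b_def)
    define A where "A i = {\<omega> \<in> space M. Xs i \<omega> / Ys i \<omega> \<le> a n \<and> Ys i \<omega> \<le> b}" for i
    have ev: "{\<omega> \<in> space M. (MAX i\<in>{1..n}. Xs i \<omega> / Ys i \<omega>) / \<kappa> (real n) \<le> x \<and>
        (MAX i\<in>{1..n}. Ys i \<omega>) / real n \<le> y} = (\<Inter>i\<in>{1..n}. A i)"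
    proof -
      have ne: "{1..n} \<noteq> {}" using n1 by simp
      have e1: "(MAX i\<in>{1..n}. Xs i \<omega> / Ys i \<omega>) / \<kappa> (real n) \<le> x \<longleftrightarrow> (\<forall>i\<in>{1..n}. Xs i \<omega> / Ys i \<omega> \<le> a n)" for \<omega>
        using kn ne by (simp add: pos_divide_le_eq a_def mult.commute)
      have e2: "(MAX i\<in>{1..n}. Ys i \<omega>) / real n \<le> y \<longleftrightarrow> (\<forall>i\<in>{1..n}. Ys i \<omega> \<le> b)" for \<omega>
        using n1 ne by (simp add: pos_divide_le_eq b_def mult.commute)
      have "{\<omega> \<in> space M. (MAX i\<in>{1..n}. Xs i \<omega> / Ys i \<omega>) / \<kappa> (real n) \<le> x \<and>
        (MAX i\<in>{1..n}. Ys i \<omega>) / real n \<le> y} = {\<omega> \<in> space M. (\<forall>i\<in>{1..n}. Xs i \<omega> / Ys i \<omega> \<le> a n) \<and> (\<forall>i\<in>{1..n}. Ys i \<omega> \<le> b)}"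
        by (simp only: e1 e2)
      also have "\<dots> = (\<Inter>i\<in>{1..n}. A i)" using ne unfolding A_def by blast
      finally show ?thesis .
    qed
    have prodeq: "Pn n = (\<Prod>i\<in>{1..n}. measure M (A i))"
      unfolding Pn_def ev
    proof (rule pm.indep_setsD[OF indsets])
      show "{1..n} \<subseteq> {1..}" "{1..n} \<noteq> {}" "finite {1..n}" using n1 by auto
      show "\<forall>j\<in>{1..n}. A j \<in> {(\<lambda>\<omega>. (Xs j \<omega>, Ys j \<omega>)) -` B \<inter> space M | B. B \<in> sets borel}"
      proof
        fix j assume "j \<in> {1..n}"
        have "{p :: real \<times> real. fst p / snd p \<le> a n \<and> snd p \<le> b} \<in> sets borel"
        proof -
          have "Measurable.pred borel (\<lambda>p :: real \<times> real. fst p / snd p \<le> a n \<and> snd p \<le> b)"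
            by measurable
          then show ?thesis by (simp add: pred_def)
        qed
        moreover have "A j = (\<lambda>\<omega>. (Xs j \<omega>, Ys j \<omega>)) -` {p :: real \<times> real. fst p / snd p \<le> a n \<and> snd p \<le> b} \<inter> space M"
          by (auto simp: A_def)
        ultimately show "A j \<in> {(\<lambda>\<omega>. (Xs j \<omega>, Ys j \<omega>)) -` B \<inter> space M | B. B \<in> sets borel}" by blast
      qed
    qed
    have bnd: "Lo n \<le> measure M (A i) \<and> measure M (A i) \<le> Up n" if i: "i \<in> {1..n}" for i
    proof -
      interpret PRi: PR mu f g M "Xs i" "Ys i" using PRi i by auto
      have q: "measure M (A i) = PRi.Gf (a n) b" unfolding A_def by (rule PRi.q_eq_G[OF an bp])
      have "c n - G n = Ag (a n)" using split1[OF an] by (simp add: c_def G_def)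
      then have u: "Up n = (Ag (a n) / cc (a n)) * exp (- cc (a n) / b)" by (simp add: Up_def c_def b_def)
      have "c n - G' n = Ag' (a n)" using split2[OF an] by (simp add: c_def G'_def)
      then have l: "Lo n = (Ag' (a n) / cc (a n)) * exp (- cc (a n) / b)" by (simp add: Lo_def c_def b_def)
      show ?thesis unfolding q u l using PRi.G_upper[OF an bp] PRi.G_lower[OF an bp] by simp
    qed
    have Lo0: "Lo n \<ge> 0"
    proof -
      have "c n - G' n = Ag' (a n)" using split2[OF an] by (simp add: c_def G'_def)
      then show ?thesis using Ag'_nonneg[of "a n"] c1[of n] by (simp add: Lo_def)
    qed
    have "(\<Prod>i\<in>{1..n}. Lo n) \<le> (\<Prod>i\<in>{1..n}. measure M (A i))"
      using bnd Lo0 by (intro prod_mono) auto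
    moreover have "(\<Prod>i\<in>{1..n}. measure M (A i)) \<le> (\<Prod>i\<in>{1..n}. Up n)"
      using bnd Lo0 by (intro prod_mono) (auto intro: measure_nonneg)
    ultimately show ?case using prodeq by simp
  qed
  have "(Pn \<longlongrightarrow> exp (- (x powr (-\<alpha>) + 1/y))) sequentially"
  proof (rule tendsto_sandwich[OF _ _ LoL UpL])
    show "eventually (\<lambda>n. Lo n ^ n \<le> Pn n) sequentially" using key by (rule eventually_mono) simp
    show "eventually (\<lambda>n. Pn n \<le> Up n ^ n) sequentially" using key by (rule eventually_mono) simp
  qed
  moreover have "exp (- (x powr (-\<alpha>) + 1/y)) = exp (- (x powr (- \<alpha>))) * exp (- (y powr (-1)))"
    using y by (simp add: exp_add[symmetric] powr_neg_one)
  ultimately show "((\<lambda>n::nat. measure M {\<omega> \<in> space M.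
        (MAX i\<in>{1..n}. Xs i \<omega> / Ys i \<omega>) / \<kappa> (real n) \<le> x \<and>
        (MAX i\<in>{1..n}. Ys i \<omega>) / real n \<le> y})
      \<longlongrightarrow> exp (- (x powr (- \<alpha>))) * exp (- (y powr (-1)))) sequentially"
    unfolding Pn_def by simp
qed


end
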